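(* Let $F$ be a simple signed graph with at least two edges that has a signed perfect elimination ordering. Then the skeleton (graph of vertices and edges) of the signed graphic zonotope of $F$ has a Hamiltonian cycle.
   Context: A signed graph is a simple graph $F=([n],E)$ together with a partition $E=E^+\cup E^-$ into positive and negative edges. Its signed graphic arrangement $\mathcal{H}(F)$ in $\mathbb{R}^n$ consists of the hyperplanes with normal vectors $e_i-e_j$ for $\{i,j\}\in E^+$ and $e_i+e_j$ for $\{i,j\}\in E^-$ ($e_i$ the standard basis vectors). The signed graphic zonotope of $F$ is the Minkowski sum of the line segments $[-v,v]$ over the normal vectors $v$ of the hyperplanes of $\mathcal{H}(F)$. A vertex $v$ of $F$ is signed simplicial if for any two distinct neighbors $x,y$ of $v$: if $\{v,x\},\{v,y\}$ are both in $E^+$ or both in $E^-$, then $\{x,y\}\in E^+$; and if $\{v,x\}\in E^+$ and $\{v,y\}\in E^-$, then $\{x,y\}\in E^-$. An ordering $v_1,\dots,v_n$ of the vertices is a signed perfect elimination ordering if for each $i$, $v_i$ is signed simplicial in the signed graph obtained from $F$ by deleting $v_1,\dots,v_{i-1}$. *)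

theory Defs
  imports "HOL-Analysis.Analysis"
begin

text \<open>A signed graph on the vertex set UNIV of a finite type 'n (playing the role of [n]),
  given by its sets of positive and negative edges (edges are 2-element vertex sets).\<close>

definition signed_graph :: "'n::finite set set \<Rightarrow> 'n set set \<Rightarrow> bool" where
  "signed_graph Ep En \<longleftrightarrow>
     (\<forall>e \<in> Ep \<union> En. \<exists>i j. i \<noteq> j \<and> e = {i, j}) \<and> Ep \<inter> En = {}"

definition signed_simplicial_in :: "'n set set \<Rightarrow> 'n set set \<Rightarrow> 'n set \<Rightarrow> 'n \<Rightarrow> bool" where
  "signed_simplicial_in Ep En S v \<longleftrightarrow>
     (\<forall>x \<in> S. \<forall>y \<in> S. x \<noteq> v \<longrightarrow> y \<noteq> v \<longrightarrow> x \<noteq> y \<longrightarrow>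
        ((({v,x} \<in> Ep \<and> {v,y} \<in> Ep) \<or> ({v,x} \<in> En \<and> {v,y} \<in> En)) \<longrightarrow> {x,y} \<in> Ep) \<and>
        (({v,x} \<in> Ep \<and> {v,y} \<in> En) \<longrightarrow> {x,y} \<in> En))"

definition signed_peo :: "'n::finite set set \<Rightarrow> 'n set set \<Rightarrow> 'n list \<Rightarrow> bool" where
  "signed_peo Ep En vs \<longleftrightarrow> distinct vs \<and> set vs = UNIV \<and>
     (\<forall>i < length vs. signed_simplicial_in Ep En (set (drop i vs)) (vs ! i))"

text \<open>The segment [-v,v] for the normal vector v of the hyperplane of an edge
  (independent of the orientation of the edge).\<close>
definition pos_segment :: "'n::finite set \<Rightarrow> (real ^ 'n) set" where
  "pos_segment e = {x. \<exists>i j t. e = {i, j} \<and> i \<noteq> j \<and> \<bar>t\<bar> \<le> 1 \<and>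
                          x = t *\<^sub>R (axis i 1 - axis j 1)}"

definition neg_segment :: "'n::finite set \<Rightarrow> (real ^ 'n) set" where
  "neg_segment e = {x. \<exists>i j t. e = {i, j} \<and> i \<noteq> j \<and> \<bar>t\<bar> \<le> 1 \<and>
                          x = t *\<^sub>R (axis i 1 + axis j 1)}"

definition edge_segment :: "'n::finite set set \<Rightarrow> 'n set \<Rightarrow> (real ^ 'n) set" where
  "edge_segment Ep e = (if e \<in> Ep then pos_segment e else neg_segment e)"

definition signed_graphic_zonotope :: "'n::finite set set \<Rightarrow> 'n set set \<Rightarrow> (real ^ 'n) set" where
  "signed_graphic_zonotope Ep En =
     {\<Sum>e \<in> Ep \<union> En. f e | f. \<forall>e \<in> Ep \<union> En. f e \<in> edge_segment Ep e}"

definition skel_vertices :: "'a::euclidean_space set \<Rightarrow> 'a set" where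
  "skel_vertices P = {x. x extreme_point_of P}"

definition skel_adj :: "'a::euclidean_space set \<Rightarrow> 'a \<Rightarrow> 'a \<Rightarrow> bool" where
  "skel_adj P u v \<longleftrightarrow> u \<in> skel_vertices P \<and> v \<in> skel_vertices P \<and> u \<noteq> v \<and>
                       closed_segment u v face_of P"

definition hamiltonian_cycle :: "'a set \<Rightarrow> ('a \<Rightarrow> 'a \<Rightarrow> bool) \<Rightarrow> 'a list \<Rightarrow> bool" where
  "hamiltonian_cycle V adj cs \<longleftrightarrow> distinct cs \<and> set cs = V \<and> length cs \<ge> 3 \<and>
     (\<forall>i < length cs. adj (cs ! i) (cs ! ((i + 1) mod length cs)))"

end

theory Submission
  imports Defs
begin

definition Zon :: "'e set \<Rightarrow> ('e \<Rightarrow> 'a::euclidean_space) \<Rightarrow> 'a set" where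
  "Zon E n = {\<Sum>e\<in>E. t e *\<^sub>R n e | t. \<forall>e\<in>E. \<bar>t e\<bar> \<le> 1}"

definition pt :: "'e set \<Rightarrow> ('e \<Rightarrow> 'a::euclidean_space) \<Rightarrow> 'a \<Rightarrow> 'a" where
  "pt E n c = (\<Sum>e\<in>E. sgn (c \<bullet> n e) *\<^sub>R n e)"

definition gen :: "'e set \<Rightarrow> ('e \<Rightarrow> 'a::euclidean_space) \<Rightarrow> 'a \<Rightarrow> bool" where
  "gen E n c \<longleftrightarrow> (\<forall>e\<in>E. c \<bullet> n e \<noteq> 0)"

lemma inner_sum_Zon: "c \<bullet> (\<Sum>e\<in>E. t e *\<^sub>R n e) = (\<Sum>e\<in>E. t e * (c \<bullet> n e))"
  by (simp add: inner_sum_right)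

lemma Zon_le:
  assumes "y \<in> Zon E n"
  shows "c \<bullet> y \<le> (\<Sum>e\<in>E. \<bar>c \<bullet> n e\<bar>)"
proof -
  obtain t where y: "y = (\<Sum>e\<in>E. t e *\<^sub>R n e)" and t: "\<forall>e\<in>E. \<bar>t e\<bar> \<le> 1"
    using assms unfolding Zon_def by blast
  have "c \<bullet> y = (\<Sum>e\<in>E. t e * (c \<bullet> n e))" by (simp add: y inner_sum_Zon)
  also have "\<dots> \<le> (\<Sum>e\<in>E. \<bar>c \<bullet> n e\<bar>)"
  proof (rule sum_mono)
    fix e assume "e \<in> E"
    then have "\<bar>t e\<bar> \<le> 1" using t by blast
    then have "\<bar>t e\<bar> * \<bar>c \<bullet> n e\<bar> \<le> \<bar>c \<bullet> n e\<bar>"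
      by (simp add: mult_left_le_one_le)
    moreover have "t e * (c \<bullet> n e) \<le> \<bar>t e\<bar> * \<bar>c \<bullet> n e\<bar>"
      by (metis abs_ge_self abs_mult)
    ultimately show "t e * (c \<bullet> n e) \<le> \<bar>c \<bullet> n e\<bar>" by linarith
  qed
  finally show ?thesis .
qed

lemma pt_in_Zon: "pt E n c \<in> Zon E n"
  unfolding Zon_def pt_def by (auto simp: sgn_if)

lemma inner_pt: "c \<bullet> pt E n c = (\<Sum>e\<in>E. \<bar>c \<bullet> n e\<bar>)"
  unfolding pt_def inner_sum_Zon by (simp add: sgn_mult_self_eq abs_sgn mult.commute)

lemma sgn_from_abs:
  fixes x t :: real
  assumes "x \<noteq> 0" "\<bar>x\<bar> = t * x"
  shows "t = sgn x"
proof (cases "x > 0")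
  case True
  then have "t * x = 1 * x" using assms by simp
  then show ?thesis using True by (simp only: mult_cancel_right) simp
next
  case False
  then have "x < 0" using assms(1) by simp
  then have "t * x = (-1) * x" using assms by simp
  then show ?thesis using \<open>x < 0\<close> by (simp only: mult_cancel_right) simp
qed

lemma Zon_max_coeffs:
  assumes fin: "finite E" and t: "\<forall>e\<in>E. \<bar>t e\<bar> \<le> 1"
    and eq: "c \<bullet> (\<Sum>e\<in>E. t e *\<^sub>R n e) = (\<Sum>e\<in>E. \<bar>c \<bullet> n e\<bar>)"
    and e: "e \<in> E" and ne: "c \<bullet> n e \<noteq> 0"
  shows "t e = sgn (c \<bullet> n e)"
proof -
  have nn: "0 \<le> \<bar>c \<bullet> n e\<bar> - t e * (c \<bullet> n e)" if "e \<in> E" for e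
  proof -
    have "\<bar>t e\<bar> \<le> 1" using t that by blast
    then have "\<bar>t e\<bar> * \<bar>c \<bullet> n e\<bar> \<le> \<bar>c \<bullet> n e\<bar>"
      by (simp add: mult_left_le_one_le)
    moreover have "t e * (c \<bullet> n e) \<le> \<bar>t e\<bar> * \<bar>c \<bullet> n e\<bar>"
      by (metis abs_ge_self abs_mult)
    ultimately show "0 \<le> \<bar>c \<bullet> n e\<bar> - t e * (c \<bullet> n e)" by linarith
  qed
  have s1: "c \<bullet> (\<Sum>e\<in>E. t e *\<^sub>R n e) = (\<Sum>e\<in>E. t e * (c \<bullet> n e))" by (simp only: inner_sum_Zon)
  have s2: "(\<Sum>e\<in>E. \<bar>c \<bullet> n e\<bar> - t e * (c \<bullet> n e)) =
     (\<Sum>e\<in>E. \<bar>c \<bullet> n e\<bar>) - (\<Sum>e\<in>E. t e * (c \<bullet> n e))" by (rule sum_subtractf)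
  have "(\<Sum>e\<in>E. \<bar>c \<bullet> n e\<bar> - t e * (c \<bullet> n e)) = 0"
    using eq s1 s2 by linarith
  moreover have "(\<Sum>e\<in>E. \<bar>c \<bullet> n e\<bar> - t e * (c \<bullet> n e)) = 0 \<longleftrightarrow>
     (\<forall>e\<in>E. \<bar>c \<bullet> n e\<bar> - t e * (c \<bullet> n e) = 0)"
    by (rule sum_nonneg_eq_0_iff[OF fin]) (rule nn)
  ultimately have z: "\<forall>e\<in>E. \<bar>c \<bullet> n e\<bar> - t e * (c \<bullet> n e) = 0"
    by blast
  show "t e = sgn (c \<bullet> n e)"
  proof (rule sgn_from_abs)
    show "c \<bullet> n e \<noteq> 0" using ne .
    show "\<bar>c \<bullet> n e\<bar> = t e * (c \<bullet> n e)" using z e by auto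
  qed
qed

lemma Zon_max_unique:
  assumes fin: "finite E" and g: "gen E n c" and y: "y \<in> Zon E n"
    and eq: "c \<bullet> y = (\<Sum>e\<in>E. \<bar>c \<bullet> n e\<bar>)"
  shows "y = pt E n c"
proof -
  obtain t where yy: "y = (\<Sum>e\<in>E. t e *\<^sub>R n e)" and t: "\<forall>e\<in>E. \<bar>t e\<bar> \<le> 1"
    using y unfolding Zon_def by blast
  have "t e = sgn (c \<bullet> n e)" if e: "e \<in> E" for e
    using Zon_max_coeffs[OF fin t eq[unfolded yy] e] g e unfolding gen_def by blast
  then show ?thesis unfolding yy pt_def by (intro sum.cong) auto
qed

lemma pt_extreme:
  assumes fin: "finite E" and g: "gen E n c"
  shows "pt E n c extreme_point_of Zon E n"
proof (rule extreme_point_of_Int_supporting_hyperplane_le)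
  show "Zon E n \<inter> {x. c \<bullet> x = (\<Sum>e\<in>E. \<bar>c \<bullet> n e\<bar>)} = {pt E n c}"
    using Zon_max_unique[OF fin g] pt_in_Zon inner_pt by blast
  show "\<And>x. x \<in> Zon E n \<Longrightarrow> c \<bullet> x \<le> (\<Sum>e\<in>E. \<bar>c \<bullet> n e\<bar>)"
    by (rule Zon_le)
qed

lemma pt_distinct:
  assumes fin: "finite E" and g: "gen E n c" and e: "e \<in> E"
    and d: "sgn (c \<bullet> n e) \<noteq> sgn (c' \<bullet> n e)"
  shows "pt E n c \<noteq> pt E n c'"
proof
  assume eq: "pt E n c = pt E n c'"
  have "c \<bullet> (\<Sum>e\<in>E. sgn (c' \<bullet> n e) *\<^sub>R n e) = (\<Sum>e\<in>E. \<bar>c \<bullet> n e\<bar>)"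
    using inner_pt[of c E n] eq unfolding pt_def by simp
  moreover have "\<forall>e\<in>E. \<bar>sgn (c' \<bullet> n e)\<bar> \<le> 1" by (auto simp: sgn_if)
  ultimately have "sgn (c' \<bullet> n e) = sgn (c \<bullet> n e)"
    using Zon_max_coeffs[OF fin, of "\<lambda>e. sgn (c' \<bullet> n e)" c n e] e g unfolding gen_def by blast
  with d show False by simp
qed

lemma pt_cong:
  assumes "\<forall>e\<in>E. sgn (c \<bullet> n e) = sgn (c' \<bullet> n e)"
  shows "pt E n c = pt E n c'"
  unfolding pt_def using assms by (intro sum.cong) auto

lemma convex_Zon: "convex (Zon E n)"
  unfolding convex_def
proof (intro allI impI ballI)
  fix x y :: 'a and u v :: real
  assume x: "x \<in> Zon E n" and y: "y \<in> Zon E n" and uv: "0 \<le> u" "0 \<le> v" "u + v = 1"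
  obtain t where xx: "x = (\<Sum>e\<in>E. t e *\<^sub>R n e)" and t: "\<forall>e\<in>E. \<bar>t e\<bar> \<le> 1"
    using x unfolding Zon_def by blast
  obtain s where yy: "y = (\<Sum>e\<in>E. s e *\<^sub>R n e)" and s: "\<forall>e\<in>E. \<bar>s e\<bar> \<le> 1"
    using y unfolding Zon_def by blast
  have "u *\<^sub>R x + v *\<^sub>R y = (\<Sum>e\<in>E. (u * t e + v * s e) *\<^sub>R n e)"
    unfolding xx yy scaleR_sum_right sum.distrib[symmetric]
    by (intro sum.cong) (simp_all add: scaleR_add_left)
  moreover have "\<forall>e\<in>E. \<bar>u * t e + v * s e\<bar> \<le> 1"
  proof
    fix e assume "e \<in> E"
    then have a: "\<bar>t e\<bar> \<le> 1" "\<bar>s e\<bar> \<le> 1" using t s by auto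
    have "\<bar>u * t e + v * s e\<bar> \<le> u * \<bar>t e\<bar> + v * \<bar>s e\<bar>"
      using uv by (metis abs_mult abs_of_nonneg abs_triangle_ineq)
    also have "\<dots> \<le> u * 1 + v * 1"
      using uv a by (intro add_mono mult_left_mono) auto
    finally show "\<bar>u * t e + v * s e\<bar> \<le> 1" using uv by simp
  qed
  ultimately show "u *\<^sub>R x + v *\<^sub>R y \<in> Zon E n" unfolding Zon_def
    unfolding mem_Collect_eq by (intro exI[of _ "\<lambda>e. u * t e + v * s e"] conjI)
qed


lemma polytope_Zon:
  fixes E :: "'e::finite set" and n :: "'e \<Rightarrow> 'a::euclidean_space"
  shows "polytope (Zon E n)"
proof -
  define L where "L = (\<lambda>t::real^'e. \<Sum>e\<in>E. (t $ e) *\<^sub>R n e)"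
  have lin: "linear L"
    unfolding L_def
    by (rule linearI) (simp_all add: sum.distrib scaleR_add_left scaleR_sum_right)
  have "Zon E n = L ` cbox (-1) 1"
  proof
    show "Zon E n \<subseteq> L ` cbox (-1) 1"
    proof
      fix x assume "x \<in> Zon E n"
      then obtain t where xx: "x = (\<Sum>e\<in>E. t e *\<^sub>R n e)" and t: "\<forall>e\<in>E. \<bar>t e\<bar> \<le> 1"
        unfolding Zon_def by blast
      define v :: "real^'e" where "v = (\<chi> e. if e \<in> E then t e else 0)"
      have "v \<in> cbox (-1) 1" using t by (auto simp: mem_box_cart v_def abs_le_iff)
      moreover have "L v = x" unfolding L_def xx v_def by (intro sum.cong) auto
      ultimately show "x \<in> L ` cbox (-1) 1" by blast
    qed
  next
    show "L ` cbox (-1) 1 \<subseteq> Zon E n"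
    proof
      fix x assume "x \<in> L ` cbox (-1) 1"
      then obtain v :: "real^'e" where v: "v \<in> cbox (-1) 1" and xx: "x = L v" by blast
      have "\<forall>e\<in>E. \<bar>v $ e\<bar> \<le> 1" using v by (auto simp: mem_box_cart abs_le_iff)
      then show "x \<in> Zon E n" unfolding Zon_def xx L_def by blast
    qed
  qed
  then show ?thesis using polytope_linear_image[OF lin polytope_interval] by simp
qed

lemma sum_upd_split:
  assumes "finite E" "e0 \<in> E"
  shows "(\<Sum>e\<in>E. (t(e0 := s)) e *\<^sub>R n e) = (\<Sum>e\<in>E - {e0}. t e *\<^sub>R n e) + s *\<^sub>R n e0"
proof -
  have "(\<Sum>e\<in>E. (t(e0 := s)) e *\<^sub>R n e) = (t(e0 := s)) e0 *\<^sub>R n e0 + (\<Sum>e\<in>E - {e0}. (t(e0 := s)) e *\<^sub>R n e)"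
    using assms by (rule sum.remove)
  also have "(\<Sum>e\<in>E - {e0}. (t(e0 := s)) e *\<^sub>R n e) = (\<Sum>e\<in>E - {e0}. t e *\<^sub>R n e)"
    by (intro sum.cong) auto
  finally show ?thesis by (simp add: add.commute)
qed

lemma extreme_is_pt:
  fixes E :: "'e::finite set" and n :: "'e \<Rightarrow> 'a::euclidean_space"
  assumes nz: "\<forall>e\<in>E. n e \<noteq> 0" and x: "x extreme_point_of Zon E n"
  shows "\<exists>a. gen E n a \<and> x = pt E n a"
proof -
  have fin: "finite E" by simp
  have "{x} exposed_face_of Zon E n"
    using x face_of_singleton exposed_face_of_polyhedron[OF polytope_imp_polyhedron[OF polytope_Zon]]
    by blast
  then obtain a b where le: "Zon E n \<subseteq> {y. a \<bullet> y \<le> b}" and eqx: "{x} = Zon E n \<inter> {y. a \<bullet> y = b}"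
    unfolding exposed_face_of_def by blast
  have xZ: "x \<in> Zon E n" and ax: "a \<bullet> x = b" using eqx by auto
  then obtain t where xx: "x = (\<Sum>e\<in>E. t e *\<^sub>R n e)" and t: "\<forall>e\<in>E. \<bar>t e\<bar> \<le> 1"
    unfolding Zon_def by blast
  have g: "gen E n a"
    unfolding gen_def
  proof
    fix e0 assume e0: "e0 \<in> E"
    show "a \<bullet> n e0 \<noteq> 0"
    proof
      assume a0: "a \<bullet> n e0 = 0"
      define R where "R = (\<Sum>e\<in>E - {e0}. t e *\<^sub>R n e)"
      have yin: "R + s *\<^sub>R n e0 \<in> Zon E n \<inter> {y. a \<bullet> y = b}" if "\<bar>s\<bar> \<le> 1" for s
      proof -
        have "R + s *\<^sub>R n e0 = (\<Sum>e\<in>E. (t(e0 := s)) e *\<^sub>R n e)"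
          unfolding R_def by (rule sum_upd_split[OF fin e0, symmetric])
        moreover have "\<forall>e\<in>E. \<bar>(t(e0 := s)) e\<bar> \<le> 1" using t that by auto
        ultimately have "R + s *\<^sub>R n e0 \<in> Zon E n" unfolding Zon_def by blast
        moreover have "x = R + t e0 *\<^sub>R n e0"
          unfolding R_def xx using sum_upd_split[OF fin e0, of t "t e0" n] by (simp del: fun_upd_apply)
        then have "a \<bullet> (R + s *\<^sub>R n e0) = b" using ax a0 by (simp add: inner_add_right)
        ultimately show ?thesis by blast
      qed
      have "R + 1 *\<^sub>R n e0 = x" "R + (-1) *\<^sub>R n e0 = x"
        using yin[of 1] yin[of "-1"] eqx by auto
      then have "R + n e0 = R - n e0" by simp
      then have h: "n e0 = - n e0" by (metis add_left_cancel diff_conv_add_uminus)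
      have "(2::real) *\<^sub>R n e0 = n e0 + n e0" by (rule scaleR_2)
      also have "\<dots> = 0" using h by (metis add.right_inverse)
      finally have "n e0 = 0" by simp
      with nz e0 show False by blast
    qed
  qed
  have "pt E n a \<in> Zon E n" by (rule pt_in_Zon)
  then have "a \<bullet> pt E n a \<le> b" using le by blast
  moreover have "b \<le> (\<Sum>e\<in>E. \<bar>a \<bullet> n e\<bar>)" using Zon_le[OF xZ, of a] ax by simp
  ultimately have "a \<bullet> x = (\<Sum>e\<in>E. \<bar>a \<bullet> n e\<bar>)" using inner_pt[of a E n] ax by linarith
  then have "x = pt E n a" by (rule Zon_max_unique[OF fin g xZ])
  with g show ?thesis by blast
qed


lemma sgn_convex_comb:
  fixes x x' l :: real
  assumes "sgn x = sgn x'" "x \<noteq> 0" "0 < l" "l < 1"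
  shows "sgn ((1 - l) * x + l * x') = sgn x"
proof (cases "x > 0")
  case True
  then have "x' > 0" using assms by (metis sgn_pos sgn_1_pos)
  then have "(1 - l) * x + l * x' > 0" using True assms by (simp add: add_pos_pos)
  then show ?thesis using True by simp
next
  case False
  then have x: "x < 0" using assms by simp
  then have "x' < 0" using assms by (metis sgn_neg sgn_1_neg)
  then have "(1 - l) * x + l * x' < 0" using x assms
    by (simp add: add_neg_neg mult_pos_neg)
  then show ?thesis using x by simp
qed

lemma pt_split:
  assumes "finite E" "e0 \<in> E"
  shows "pt E n c = (\<Sum>e\<in>E - {e0}. sgn (c \<bullet> n e) *\<^sub>R n e) + sgn (c \<bullet> n e0) *\<^sub>R n e0"
  unfolding pt_def using sum.remove[OF assms, of "\<lambda>e. sgn (c \<bullet> n e) *\<^sub>R n e"]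
  by (simp add: add.commute)

lemma adj_face:
  assumes fin: "finite E" and gc: "gen E n c" and gc': "gen E n c'" and e0: "e0 \<in> E"
    and d0: "sgn (c \<bullet> n e0) \<noteq> sgn (c' \<bullet> n e0)"
    and same: "\<forall>e\<in>E - {e0}. sgn (c \<bullet> n e) = sgn (c' \<bullet> n e)"
  shows "closed_segment (pt E n c) (pt E n c') face_of Zon E n"
proof -
  define a where "a = c \<bullet> n e0"
  define a' where "a' = c' \<bullet> n e0"
  have a0: "a \<noteq> 0" "a' \<noteq> 0" using gc gc' e0 unfolding gen_def a_def a'_def by auto
  have sa: "sgn a \<noteq> sgn a'" using d0 unfolding a_def a'_def .
  have aa: "(a > 0 \<and> a' < 0) \<or> (a < 0 \<and> a' > 0)"
    using a0 sa by (metis linorder_neqE_linordered_idom sgn_neg sgn_pos)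
  define l where "l = a / (a - a')"
  have l01: "0 < l" "l < 1" using aa unfolding l_def by (auto simp: field_simps)
  have ll: "l * (a - a') = a" using aa unfolding l_def by auto
  define d where "d = c + l *\<^sub>R (c' - c)"
  have dn: "d \<bullet> n e = (1 - l) * (c \<bullet> n e) + l * (c' \<bullet> n e)" for e
    unfolding d_def by (simp add: inner_add_left inner_diff_left algebra_simps)
  have d0z: "d \<bullet> n e0 = 0" using dn[of e0] ll unfolding a_def[symmetric] a'_def[symmetric]
    by (simp add: algebra_simps)
  have dsg: "sgn (d \<bullet> n e) = sgn (c \<bullet> n e)" if "e \<in> E - {e0}" for e
    unfolding dn using sgn_convex_comb[of "c \<bullet> n e" "c' \<bullet> n e" l] same that gc l01
    unfolding gen_def by auto
  define B where "B = (\<Sum>e\<in>E. \<bar>d \<bullet> n e\<bar>)"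
  define F where "F = Zon E n \<inter> {y. d \<bullet> y = B}"
  have face: "F face_of Zon E n"
    unfolding F_def B_def by (rule face_of_Int_supporting_hyperplane_le[OF convex_Zon Zon_le])
  have convF: "convex F" unfolding F_def by (intro convex_Int convex_Zon convex_hyperplane)
  have inF: "pt E n c'' \<in> F" if "\<forall>e\<in>E - {e0}. sgn (c'' \<bullet> n e) = sgn (d \<bullet> n e)" for c''
  proof -
    have "d \<bullet> pt E n c'' = (\<Sum>e\<in>E. sgn (c'' \<bullet> n e) * (d \<bullet> n e))"
      unfolding pt_def inner_sum_Zon ..
    also have "\<dots> = B" unfolding B_def
    proof (intro sum.cong refl)
      fix e assume e: "e \<in> E"
      show "sgn (c'' \<bullet> n e) * (d \<bullet> n e) = \<bar>d \<bullet> n e\<bar>"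
      proof (cases "e = e0")
        case True then show ?thesis using d0z by simp
      next
        case False then have "sgn (c'' \<bullet> n e) = sgn (d \<bullet> n e)" using that e by auto
        then show ?thesis by (simp add: sgn_if)
      qed
    qed
    finally show ?thesis unfolding F_def using pt_in_Zon by blast
  qed
  have p1: "pt E n c \<in> F" by (rule inF) (use dsg in auto)
  have p2: "pt E n c' \<in> F" by (rule inF) (use dsg same in auto)
  define R where "R = (\<Sum>e\<in>E - {e0}. sgn (c \<bullet> n e) *\<^sub>R n e)"
  define \<sigma> where "\<sigma> = sgn a"
  have sig: "\<sigma> * \<sigma> = 1" "sgn a' = - \<sigma>" using aa unfolding \<sigma>_def by auto
  have pc: "pt E n c = R + \<sigma> *\<^sub>R n e0"
    unfolding pt_split[OF fin e0] R_def \<sigma>_def a_def ..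
  have R': "(\<Sum>e\<in>E - {e0}. sgn (c' \<bullet> n e) *\<^sub>R n e) = R"
    unfolding R_def using same by (intro sum.cong) auto
  have pc': "pt E n c' = R + (- \<sigma>) *\<^sub>R n e0"
    unfolding pt_split[OF fin e0] R' using sig(2) unfolding a'_def by simp
  have "F = closed_segment (pt E n c) (pt E n c')"
  proof
    show "closed_segment (pt E n c) (pt E n c') \<subseteq> F"
      by (rule closed_segment_subset[OF p1 p2 convF])
  next
    show "F \<subseteq> closed_segment (pt E n c) (pt E n c')"
    proof
      fix y assume y: "y \<in> F"
      then have yZ: "y \<in> Zon E n" and dy: "d \<bullet> y = B" unfolding F_def by auto
      obtain t where yy: "y = (\<Sum>e\<in>E. t e *\<^sub>R n e)" and t: "\<forall>e\<in>E. \<bar>t e\<bar> \<le> 1"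
        using yZ unfolding Zon_def by blast
      have teq: "t e = sgn (c \<bullet> n e)" if e: "e \<in> E - {e0}" for e
      proof -
        have "d \<bullet> n e \<noteq> 0" using dsg[OF e] gc e unfolding gen_def by (auto simp: sgn_0_0)
        then have "t e = sgn (d \<bullet> n e)"
          using Zon_max_coeffs[OF fin t, of d n e] dy e unfolding yy B_def by blast
        then show ?thesis using dsg[OF e] by simp
      qed
      have "y = (\<Sum>e\<in>E - {e0}. t e *\<^sub>R n e) + t e0 *\<^sub>R n e0"
        unfolding yy using sum.remove[OF fin e0, of "\<lambda>e. t e *\<^sub>R n e"] by (simp add: add.commute)
      also have "(\<Sum>e\<in>E - {e0}. t e *\<^sub>R n e) = R"
        unfolding R_def using teq by (intro sum.cong) auto
      finally have yR: "y = R + t e0 *\<^sub>R n e0" .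
      define u where "u = (1 - \<sigma> * t e0) / 2"
      have t0: "\<bar>t e0\<bar> \<le> 1" using t e0 by blast
      have u01: "0 \<le> u" "u \<le> 1"
        using t0 sig aa unfolding u_def \<sigma>_def by (auto simp: abs_le_iff)
      have sc: "(1 - u) * \<sigma> - u * \<sigma> = t e0"
      proof -
        have "(1 - u) * \<sigma> - u * \<sigma> = \<sigma> - (1 - \<sigma> * t e0) * \<sigma>" unfolding u_def by (simp add: field_simps)
        also have "\<dots> = (\<sigma> * \<sigma>) * t e0" by (simp add: algebra_simps)
        finally show ?thesis using sig by simp
      qed
      have "(1 - u) *\<^sub>R (R + \<sigma> *\<^sub>R n e0) + u *\<^sub>R (R + (- \<sigma>) *\<^sub>R n e0)
          = R + ((1 - u) * \<sigma> - u * \<sigma>) *\<^sub>R n e0"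
        by (simp add: algebra_simps flip: scaleR_add_left)
      then have "y = (1 - u) *\<^sub>R pt E n c + u *\<^sub>R pt E n c'"
        unfolding pc pc' yR sc by simp
      then show "y \<in> closed_segment (pt E n c) (pt E n c')"
        unfolding closed_segment_def using u01 by blast
    qed
  qed
  with face show ?thesis by simp
qed

lemma cut_key:
  fixes l :: "real list"
  assumes sl: "sorted_wrt (<) l" and i: "i < length l" and k: "k \<le> length l"
  defines "t \<equiv> (if k = 0 then (if length l = 0 then 0 else l!0 - 1)
                 else if k \<ge> length l then l!(length l - 1) + 1 else (l!(k-1) + l!k)/2)"
  shows "(l!i < t \<longleftrightarrow> i < k) \<and> l!i \<noteq> t"
proof -
  have lt: "l!a < l!b" if "a < b" "b < length l" for a b
    using sorted_wrt_nth_less[OF sl that] .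
  have le: "l!a \<le> l!b" if "a \<le> b" "b < length l" for a b
    using lt[of a b] that by (cases "a = b") auto
  show ?thesis
  proof (cases "k = 0")
    case True
    then have "t = l!0 - 1" using i unfolding t_def by auto
    moreover have "l!0 \<le> l!i" using le[of 0 i] i by simp
    ultimately show ?thesis using True by auto
  next
    case k0: False
    show ?thesis
    proof (cases "k \<ge> length l")
      case True
      then have "t = l!(length l - 1) + 1" using k0 unfolding t_def by auto
      moreover have "l!i \<le> l!(length l - 1)" using le[of i "length l - 1"] i by simp
      ultimately show ?thesis using True i by auto
    next
      case False
      then have tt: "t = (l!(k-1) + l!k)/2" using k0 unfolding t_def by auto
      have a: "l!(k-1) < l!k" using lt[of "k-1" k] False k0 by simp
      have b1: "l!(k-1) < t" unfolding tt using a by (simp add: field_simps)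
      have b2: "t < l!k" unfolding tt using a by (simp add: field_simps)
      show ?thesis
      proof (cases "i < k")
        case True
        then have "l!i \<le> l!(k-1)" using le[of i "k-1"] False by simp
        then have "l!i < t" using b1 by linarith
        then show ?thesis using True by simp
      next
        case ik: False
        then have "l!k \<le> l!i" using le[of k i] i by simp
        then have "t < l!i" using b2 by linarith
        then show ?thesis using ik by simp
      qed
    qed
  qed
qed

lemma cut_points:
  fixes W :: "real set"
  assumes fin: "finite W"
  shows "\<exists>t::nat \<Rightarrow> real. (\<forall>k\<le>card W. \<forall>x\<in>W. x \<noteq> t k) \<and>
     (\<forall>k\<le>card W. card {x\<in>W. x < t k} = k) \<and>
     (\<forall>k<card W. \<exists>x\<in>W. \<not> x < t k \<and> x < t (Suc k) \<and>
          (\<forall>y\<in>W. y \<noteq> x \<longrightarrow> (y < t k \<longleftrightarrow> y < t (Suc k))))"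
proof -
  obtain l where sl: "sorted_wrt (<) l" and sW: "set l = W" and len: "length l = card W"
    using sorted_list_of_set.finite_set_strict_sorted[OF fin] by blast
  have dl: "distinct l" using sl strict_sorted_iff by blast
  define t where "t = (\<lambda>k. if k = 0 then (if length l = 0 then 0 else l!0 - 1)
                 else if k \<ge> length l then l!(length l - 1) + 1 else (l!(k-1) + l!k)/2)"
  have key: "(l!i < t k \<longleftrightarrow> i < k) \<and> l!i \<noteq> t k" if "i < length l" "k \<le> length l" for i k
    using cut_key[OF sl that] unfolding t_def by simp
  have W: "W = (\<lambda>i. l!i) ` {..<length l}" using sW by (auto simp: in_set_conv_nth)
  have inj: "inj_on (\<lambda>i. l!i) {..<length l}" using dl by (simp add: inj_on_def nth_eq_iff_index_eq)
  have P1: "\<forall>k\<le>card W. \<forall>x\<in>W. x \<noteq> t k"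
  proof (intro allI impI ballI)
    fix k x assume k: "k \<le> card W" and x: "x \<in> W"
    then obtain i where i: "i < length l" "x = l!i" unfolding W by blast
    show "x \<noteq> t k" using key[OF i(1), of k] k len i(2) by simp
  qed
  have P2: "\<forall>k\<le>card W. card {x\<in>W. x < t k} = k"
  proof (intro allI impI)
    fix k assume k: "k \<le> card W"
    have "{x\<in>W. x < t k} = (\<lambda>i. l!i) ` {..<k}"
    proof
      show "{x\<in>W. x < t k} \<subseteq> (\<lambda>i. l!i) ` {..<k}"
      proof
        fix x assume "x \<in> {x\<in>W. x < t k}"
        then have x: "x \<in> W" "x < t k" by auto
        then obtain i where i: "i < length l" "x = l!i" unfolding W by blast
        then have "i < k" using key[OF i(1), of k] k len x(2) by simp
        then show "x \<in> (\<lambda>i. l!i) ` {..<k}" using i(2) by blast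
      qed
      show "(\<lambda>i. l!i) ` {..<k} \<subseteq> {x\<in>W. x < t k}"
      proof
        fix x assume "x \<in> (\<lambda>i. l!i) ` {..<k}"
        then obtain i where i: "i < k" "x = l!i" by blast
        then have il: "i < length l" using k len by simp
        then have "x \<in> W" using i(2) sW nth_mem by blast
        moreover have "x < t k" using key[OF il, of k] k len i by simp
        ultimately show "x \<in> {x\<in>W. x < t k}" by simp
      qed
    qed
    moreover have "inj_on (\<lambda>i. l!i) {..<k}" by (rule inj_on_subset[OF inj]) (use k len in auto)
    ultimately show "card {x\<in>W. x < t k} = k" by (simp add: card_image)
  qed
  have P3: "\<forall>k<card W. \<exists>x\<in>W. \<not> x < t k \<and> x < t (Suc k) \<and>
          (\<forall>y\<in>W. y \<noteq> x \<longrightarrow> (y < t k \<longleftrightarrow> y < t (Suc k)))"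
  proof (intro allI impI)
    fix k assume k: "k < card W"
    show "\<exists>x\<in>W. \<not> x < t k \<and> x < t (Suc k) \<and>
          (\<forall>y\<in>W. y \<noteq> x \<longrightarrow> (y < t k \<longleftrightarrow> y < t (Suc k)))"
    proof (rule bexI[of _ "l!k"])
      show "l!k \<in> W" using k len sW by auto
      show "\<not> l!k < t k \<and> l!k < t (Suc k) \<and>
          (\<forall>y\<in>W. y \<noteq> l!k \<longrightarrow> (y < t k \<longleftrightarrow> y < t (Suc k)))"
      proof (intro conjI ballI impI)
        show "\<not> l!k < t k" using key[of k k] k len by simp
        show "l!k < t (Suc k)" using key[of k "Suc k"] k len by simp
        fix y assume "y \<in> W" "y \<noteq> l!k"
        then obtain i where i: "i < length l" "y = l!i" "i \<noteq> k" unfolding W by auto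
        have "y < t k \<longleftrightarrow> i < k" using key[OF i(1), of k] k len i(2) by simp
        moreover have "y < t (Suc k) \<longleftrightarrow> i < Suc k" using key[OF i(1), of "Suc k"] k len i(2) by simp
        ultimately show "y < t k \<longleftrightarrow> y < t (Suc k)" using i(3) by auto
      qed
    qed
  qed
  show ?thesis using P1 P2 P3 by blast
qed

definition nv :: "'n::finite set set \<Rightarrow> 'n set \<Rightarrow> real^'n" where
  "nv Ep e = (SOME x. \<exists>i j. e = {i, j} \<and> i \<noteq> j \<and>
       x = (if e \<in> Ep then axis i 1 - axis j 1 else axis i 1 + axis j 1))"

lemma nv_ex:
  assumes "e = {i, j}" "i \<noteq> j"
  shows "\<exists>i' j'. e = {i', j'} \<and> i' \<noteq> j' \<and>
       nv Ep e = (if e \<in> Ep then axis i' 1 - axis j' 1 else axis i' 1 + axis j' 1)"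
  unfolding nv_def by (rule someI_ex) (use assms in blast)

lemma inner_axis1: "(c::real^'n) \<bullet> axis i 1 = c $ i"
  by (simp add: inner_axis)

lemma nv_pos_val:
  assumes "e = {i, j}" "i \<noteq> j" "e \<in> Ep"
  shows "\<exists>s::real. (s = 1 \<or> s = -1) \<and> (\<forall>c. c \<bullet> nv Ep e = s * (c $ i - c $ j))"
proof -
  obtain i' j' where e: "e = {i', j'}" "i' \<noteq> j'" and nvv: "nv Ep e = axis i' 1 - axis j' 1"
    using nv_ex[OF assms(1,2), of Ep] assms(3) by auto
  have "(i' = i \<and> j' = j) \<or> (i' = j \<and> j' = i)" using e assms(1) by (auto simp: doubleton_eq_iff)
  then show ?thesis
  proof
    assume "i' = i \<and> j' = j"
    then show ?thesis using nvv by (intro exI[of _ 1]) (simp add: inner_diff_right inner_axis1)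
  next
    assume "i' = j \<and> j' = i"
    then show ?thesis using nvv by (intro exI[of _ "-1"]) (simp add: inner_diff_right inner_axis1)
  qed
qed

lemma nv_neg_val:
  assumes "e = {i, j}" "i \<noteq> j" "e \<notin> Ep"
  shows "c \<bullet> nv Ep e = c $ i + c $ j"
proof -
  obtain i' j' where e: "e = {i', j'}" "i' \<noteq> j'" and nvv: "nv Ep e = axis i' 1 + axis j' 1"
    using nv_ex[OF assms(1,2), of Ep] assms(3) by auto
  have "(i' = i \<and> j' = j) \<or> (i' = j \<and> j' = i)" using e assms(1) by (auto simp: doubleton_eq_iff)
  then show ?thesis using nvv by (auto simp: inner_add_right inner_axis1)
qed

lemma nv_nz:
  assumes "e = {i, j}" "i \<noteq> j"
  shows "nv Ep e \<noteq> 0"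
proof -
  obtain i' j' where e: "e = {i', j'}" "i' \<noteq> j'" and
    nvv: "nv Ep e = (if e \<in> Ep then axis i' 1 - axis j' 1 else axis i' 1 + axis j' 1)"
    using nv_ex[OF assms(1,2), of Ep] by auto
  have "nv Ep e $ i' = 1" using nvv e(2) by (auto simp: axis_def)
  then show ?thesis by auto
qed

lemma nv_local:
  assumes "e = {i, j}" "i \<noteq> j" "c $ i = c' $ i" "c $ j = c' $ j"
  shows "c \<bullet> nv Ep e = c' \<bullet> nv Ep e"
proof (cases "e \<in> Ep")
  case True
  then obtain s where "\<forall>c. c \<bullet> nv Ep e = s * (c $ i - c $ j)" using nv_pos_val[OF assms(1,2)] by blast
  then show ?thesis using assms by simp
next
  case False
  then show ?thesis using nv_neg_val[OF assms(1,2) False] assms by simp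
qed

lemma edge_segment_eq:
  assumes "e = {i, j}" "i \<noteq> j"
  shows "edge_segment Ep e = {t *\<^sub>R nv Ep e | t. \<bar>t\<bar> \<le> 1}"
proof -
  obtain i' j' where e: "e = {i', j'}" "i' \<noteq> j'" and
    nvv: "nv Ep e = (if e \<in> Ep then axis i' 1 - axis j' 1 else axis i' 1 + axis j' 1)"
    using nv_ex[OF assms(1,2), of Ep] by auto
  show ?thesis
  proof (cases "e \<in> Ep")
    case True
    then have nvv: "nv Ep e = axis i' 1 - axis j' 1" using nvv by simp
    have "pos_segment e = {t *\<^sub>R nv Ep e | t. \<bar>t\<bar> \<le> 1}"
    proof
      show "pos_segment e \<subseteq> {t *\<^sub>R nv Ep e | t. \<bar>t\<bar> \<le> 1}"
      proof
        fix x assume "x \<in> pos_segment e"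
        then obtain a b t where ab: "e = {a, b}" "a \<noteq> b" "\<bar>t\<bar> \<le> 1" "x = t *\<^sub>R (axis a 1 - axis b 1)"
          unfolding pos_segment_def by blast
        have "(a = i' \<and> b = j') \<or> (a = j' \<and> b = i')" using e ab by (auto simp: doubleton_eq_iff)
        then show "x \<in> {t *\<^sub>R nv Ep e | t. \<bar>t\<bar> \<le> 1}"
        proof
          assume "a = i' \<and> b = j'"
          then have "x = t *\<^sub>R nv Ep e" using ab nvv by simp
          then show ?thesis using ab(3) by blast
        next
          assume "a = j' \<and> b = i'"
          then have "x = t *\<^sub>R (axis j' 1 - axis i' 1)" using ab by simp
          also have "\<dots> = (-t) *\<^sub>R (axis i' 1 - axis j' 1)"
            by (metis minus_diff_eq scaleR_minus_left scaleR_minus_right)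
          finally have "x = (-t) *\<^sub>R nv Ep e" using nvv by simp
          moreover have "\<bar>-t\<bar> \<le> 1" using ab by simp
          ultimately show ?thesis by blast
        qed
      qed
      show "{t *\<^sub>R nv Ep e | t. \<bar>t\<bar> \<le> 1} \<subseteq> pos_segment e"
      proof
        fix x assume "x \<in> {t *\<^sub>R nv Ep e | t. \<bar>t\<bar> \<le> 1}"
        then obtain t where x: "x = t *\<^sub>R nv Ep e" "\<bar>t\<bar> \<le> 1" by blast
        show "x \<in> pos_segment e" unfolding pos_segment_def
          by (intro CollectI exI[of _ i'] exI[of _ j'] exI[of _ t] conjI e(1) e(2) x(2)) (simp add: x nvv)
      qed
    qed
    then show ?thesis using True unfolding edge_segment_def by simp
  next
    case False
    then have nvv: "nv Ep e = axis i' 1 + axis j' 1" using nvv by simp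
    have "neg_segment e = {t *\<^sub>R nv Ep e | t. \<bar>t\<bar> \<le> 1}"
    proof
      show "neg_segment e \<subseteq> {t *\<^sub>R nv Ep e | t. \<bar>t\<bar> \<le> 1}"
      proof
        fix x assume "x \<in> neg_segment e"
        then obtain a b t where ab: "e = {a, b}" "a \<noteq> b" "\<bar>t\<bar> \<le> 1" "x = t *\<^sub>R (axis a 1 + axis b 1)"
          unfolding neg_segment_def by blast
        have "(a = i' \<and> b = j') \<or> (a = j' \<and> b = i')" using e ab by (auto simp: doubleton_eq_iff)
        then have "x = t *\<^sub>R nv Ep e"
        proof
          assume "a = i' \<and> b = j'" then show ?thesis using ab nvv by simp
        next
          assume "a = j' \<and> b = i'" then show ?thesis using ab nvv by (simp add: add.commute)
        qed
        then show "x \<in> {t *\<^sub>R nv Ep e | t. \<bar>t\<bar> \<le> 1}" using ab by blast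
      qed
      show "{t *\<^sub>R nv Ep e | t. \<bar>t\<bar> \<le> 1} \<subseteq> neg_segment e"
      proof
        fix x assume "x \<in> {t *\<^sub>R nv Ep e | t. \<bar>t\<bar> \<le> 1}"
        then obtain t where x: "x = t *\<^sub>R nv Ep e" "\<bar>t\<bar> \<le> 1" by blast
        show "x \<in> neg_segment e" unfolding neg_segment_def
          by (intro CollectI exI[of _ i'] exI[of _ j'] exI[of _ t] conjI e(1) e(2) x(2)) (simp add: x nvv)
      qed
    qed
    then show ?thesis using False unfolding edge_segment_def by simp
  qed
qed

lemma zonotope_eq:
  assumes sg: "signed_graph Ep En"
  shows "signed_graphic_zonotope Ep En = Zon (Ep \<union> En) (nv Ep)"
proof -
  have seg: "edge_segment Ep e = {t *\<^sub>R nv Ep e | t. \<bar>t\<bar> \<le> 1}" if "e \<in> Ep \<union> En" for e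
  proof -
    have "\<exists>i j. i \<noteq> j \<and> e = {i, j}"
      using conjunct1[OF sg[unfolded signed_graph_def]] that by (rule bspec)
    then obtain i j where ij: "i \<noteq> j" "e = {i, j}" by (elim exE conjE)
    show ?thesis by (rule edge_segment_eq[OF ij(2) ij(1)])
  qed
  show ?thesis
  proof
    show "signed_graphic_zonotope Ep En \<subseteq> Zon (Ep \<union> En) (nv Ep)"
    proof
      fix x assume "x \<in> signed_graphic_zonotope Ep En"
      then obtain f where x: "x = (\<Sum>e\<in>Ep \<union> En. f e)" and f: "\<forall>e\<in>Ep \<union> En. f e \<in> edge_segment Ep e"
        unfolding signed_graphic_zonotope_def by blast
      have "\<forall>e\<in>Ep \<union> En. \<exists>t. f e = t *\<^sub>R nv Ep e \<and> \<bar>t\<bar> \<le> 1"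
      proof
        fix e assume e: "e \<in> Ep \<union> En"
        have "f e \<in> edge_segment Ep e" using f e by (rule bspec)
        then have "f e \<in> {t *\<^sub>R nv Ep e | t. \<bar>t\<bar> \<le> 1}" using seg[OF e] by simp
        then show "\<exists>t. f e = t *\<^sub>R nv Ep e \<and> \<bar>t\<bar> \<le> 1" by simp
      qed
      then obtain t where t: "\<forall>e\<in>Ep \<union> En. f e = t e *\<^sub>R nv Ep e \<and> \<bar>t e\<bar> \<le> 1"
        using bchoice[of "Ep \<union> En" "\<lambda>e t. f e = t *\<^sub>R nv Ep e \<and> \<bar>t\<bar> \<le> 1"] by blast
      have "x = (\<Sum>e\<in>Ep \<union> En. t e *\<^sub>R nv Ep e)" unfolding x using t by (intro sum.cong) auto
      moreover have "\<forall>e\<in>Ep \<union> En. \<bar>t e\<bar> \<le> 1" using t by simp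
      ultimately show "x \<in> Zon (Ep \<union> En) (nv Ep)" unfolding Zon_def mem_Collect_eq
        by (intro exI[of _ t] conjI)
    qed
    show "Zon (Ep \<union> En) (nv Ep) \<subseteq> signed_graphic_zonotope Ep En"
    proof
      fix x assume "x \<in> Zon (Ep \<union> En) (nv Ep)"
      then obtain t where x: "x = (\<Sum>e\<in>Ep \<union> En. t e *\<^sub>R nv Ep e)" and t: "\<forall>e\<in>Ep \<union> En. \<bar>t e\<bar> \<le> 1"
        unfolding Zon_def by blast
      have "\<forall>e\<in>Ep \<union> En. t e *\<^sub>R nv Ep e \<in> edge_segment Ep e" using t seg by auto
      then show "x \<in> signed_graphic_zonotope Ep En"
        unfolding signed_graphic_zonotope_def x mem_Collect_eq
        by (intro exI[of _ "\<lambda>e. t e *\<^sub>R nv Ep e"] conjI refl)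
    qed
  qed
qed

definition ES :: "'n set set \<Rightarrow> 'n set set \<Rightarrow> 'n set \<Rightarrow> 'n set set" where
  "ES Ep En S = {e \<in> Ep \<union> En. e \<subseteq> S}"

definition sameR :: "'n::finite set set \<Rightarrow> 'n set set \<Rightarrow> real^'n \<Rightarrow> real^'n \<Rightarrow> bool" where
  "sameR Ep E' a c \<longleftrightarrow> (\<forall>e\<in>E'. sgn (a \<bullet> nv Ep e) = sgn (c \<bullet> nv Ep e))"

definition onediff :: "'n::finite set set \<Rightarrow> 'n set set \<Rightarrow> real^'n \<Rightarrow> real^'n \<Rightarrow> bool" where
  "onediff Ep E' a c \<longleftrightarrow> (\<exists>e0\<in>E'. sgn (a \<bullet> nv Ep e0) \<noteq> sgn (c \<bullet> nv Ep e0) \<and>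
      (\<forall>e\<in>E' - {e0}. sgn (a \<bullet> nv Ep e) = sgn (c \<bullet> nv Ep e)))"

definition RC :: "'n::finite set set \<Rightarrow> 'n set set \<Rightarrow> (real^'n) list \<Rightarrow> bool" where
  "RC Ep E' cs \<longleftrightarrow> (\<forall>c\<in>set cs. gen E' (nv Ep) c) \<and>
     (\<forall>a. gen E' (nv Ep) a \<longrightarrow> (\<exists>c\<in>set cs. sameR Ep E' a c)) \<and>
     (\<forall>i<length cs. \<forall>j<length cs. i \<noteq> j \<longrightarrow> \<not> sameR Ep E' (cs!i) (cs!j)) \<and>
     (2 \<le> length cs \<longrightarrow> (\<forall>i<length cs. onediff Ep E' (cs!i) (cs!((i+1) mod length cs)))) \<and>
     card E' + 1 \<le> length cs \<and> (length cs = 1 \<or> even (length cs))"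

lemma onediff_sym: "onediff Ep E' a c \<Longrightarrow> onediff Ep E' c a"
  unfolding onediff_def by metis

lemma sgn_s:
  fixes s x y :: real
  assumes "s = 1 \<or> s = -1" "x \<noteq> 0" "y \<noteq> 0"
  shows "sgn (s * x) = sgn (s * y) \<longleftrightarrow> (0 < x \<longleftrightarrow> 0 < y)"
  using assms by (auto simp: sgn_mult sgn_if)

definition cutP :: "real set \<Rightarrow> (nat \<Rightarrow> real) \<Rightarrow> bool" where
  "cutP W t \<longleftrightarrow> (\<forall>k\<le>card W. \<forall>x\<in>W. x \<noteq> t k) \<and>
     (\<forall>k\<le>card W. card {x\<in>W. x < t k} = k) \<and>
     (\<forall>k<card W. \<exists>x\<in>W. \<not> x < t k \<and> x < t (Suc k) \<and>
          (\<forall>y\<in>W. y \<noteq> x \<longrightarrow> (y < t k \<longleftrightarrow> y < t (Suc k))))"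

lemma cutP_1: "cutP W t \<Longrightarrow> k \<le> card W \<Longrightarrow> x \<in> W \<Longrightarrow> x \<noteq> t k"
  unfolding cutP_def by blast
lemma cutP_2: "cutP W t \<Longrightarrow> k \<le> card W \<Longrightarrow> card {x\<in>W. x < t k} = k"
  unfolding cutP_def by blast
lemma cutP_3: "cutP W t \<Longrightarrow> k < card W \<Longrightarrow> \<exists>x\<in>W. \<not> x < t k \<and> x < t (Suc k) \<and>
          (\<forall>y\<in>W. y \<noteq> x \<longrightarrow> (y < t k \<longleftrightarrow> y < t (Suc k)))"
  unfolding cutP_def by blast

lemma cutP_some: "finite W \<Longrightarrow> cutP W (SOME t. cutP W t)"
  using cut_points unfolding cutP_def by (rule someI_ex)

locale stepctx =
  fixes Ep En :: "'n::finite set set" and v :: 'n and S' :: "'n set" and cs :: "(real^'n) list"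
  assumes sg: "signed_graph Ep En" and vS: "v \<notin> S'"
    and simpl: "signed_simplicial_in Ep En (insert v S') v"
    and rc: "RC Ep (ES Ep En S') cs"
begin

definition N :: "'n set" where "N = {u\<in>S'. {v, u} \<in> Ep \<union> En}"
definition wv :: "'n \<Rightarrow> real^'n \<Rightarrow> real" where
  "wv u c = (if {v, u} \<in> Ep then c $ u else - (c $ u))"
definition upd :: "real^'n \<Rightarrow> real \<Rightarrow> real^'n" where
  "upd c t = (\<chi> i. if i = v then t else c $ i)"

abbreviation "E' \<equiv> ES Ep En S'"
abbreviation "E \<equiv> ES Ep En (insert v S')"
abbreviation "n \<equiv> nv Ep"

lemma disj: "Ep \<inter> En = {}" using sg unfolding signed_graph_def by blast

lemma edge2: "e \<in> Ep \<union> En \<Longrightarrow> \<exists>i j. i \<noteq> j \<and> e = {i, j}"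
  using sg unfolding signed_graph_def by blast

lemma finN: "finite N" by simp

lemma N_ne: "u \<in> N \<Longrightarrow> u \<noteq> v" unfolding N_def using vS by auto

lemma E'_sub: "E' \<subseteq> E" unfolding ES_def by auto

lemma E_decomp: "E = E' \<union> (\<lambda>u. {v, u}) ` N"
proof
  show "E \<subseteq> E' \<union> (\<lambda>u. {v, u}) ` N"
  proof
    fix e assume e: "e \<in> E"
    then have eE: "e \<in> Ep \<union> En" and sub: "e \<subseteq> insert v S'" unfolding ES_def by auto
    obtain i j where ij: "i \<noteq> j" "e = {i, j}" using edge2[OF eE] by (elim exE conjE)
    show "e \<in> E' \<union> (\<lambda>u. {v, u}) ` N"
    proof (cases "v \<in> e")
      case False
      then have "e \<subseteq> S'" using sub by auto
      then show ?thesis using eE unfolding ES_def by auto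
    next
      case True
      then obtain u where u: "e = {v, u}" "u \<noteq> v" using ij by auto
      then have "u \<in> S'" using sub by auto
      then have "u \<in> N" unfolding N_def using u eE by auto
      then show ?thesis using u by auto
    qed
  qed
  show "E' \<union> (\<lambda>u. {v, u}) ` N \<subseteq> E"
    unfolding ES_def N_def by auto
qed

lemma vnotE': "e \<in> E' \<Longrightarrow> v \<notin> e" unfolding ES_def using vS by auto

lemma card_E: "card E = card E' + card N"
proof -
  have "E' \<inter> (\<lambda>u. {v, u}) ` N = {}" using vnotE' by auto
  moreover have "inj_on (\<lambda>u. {v, u}) N" unfolding inj_on_def using N_ne by (auto simp: doubleton_eq_iff)
  ultimately show ?thesis unfolding E_decomp
    by (simp add: card_Un_disjoint card_image)
qed

lemma upd_v [simp]: "upd c t $ v = t" unfolding upd_def by simp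
lemma upd_other [simp]: "i \<noteq> v \<Longrightarrow> upd c t $ i = c $ i" unfolding upd_def by simp

lemma wv_upd [simp]: "u \<in> N \<Longrightarrow> wv u (upd c t) = wv u c"
  unfolding wv_def using N_ne by auto

lemma upd_E': "e \<in> E' \<Longrightarrow> upd c t \<bullet> n e = c \<bullet> n e"
proof -
  assume e: "e \<in> E'"
  then have "e \<in> Ep \<union> En" unfolding ES_def by auto
  then obtain i j where ij: "i \<noteq> j" "e = {i, j}" using edge2 by (meson)
  have "v \<notin> e" using vnotE'[OF e] .
  then have "i \<noteq> v" "j \<noteq> v" using ij by auto
  then have "upd c t $ i = c $ i" "upd c t $ j = c $ j" by simp_all
  then show ?thesis by (rule nv_local[OF ij(2) ij(1)])
qed

lemma F1: "u \<in> N \<Longrightarrow> \<exists>s::real. (s = 1 \<or> s = -1) \<and> (\<forall>c. c \<bullet> n {v, u} = s * (c $ v - wv u c))"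
proof -
  assume u: "u \<in> N"
  then have uv: "v \<noteq> u" using N_ne by auto
  show ?thesis
  proof (cases "{v, u} \<in> Ep")
    case True
    then obtain s where s: "s = 1 \<or> s = -1" "\<forall>c. c \<bullet> n {v, u} = s * (c $ v - c $ u)"
      using nv_pos_val[OF refl uv] by blast
    then show ?thesis using True unfolding wv_def by auto
  next
    case False
    then have "\<forall>c. c \<bullet> n {v, u} = 1 * (c $ v - wv u c)"
      using nv_neg_val[OF refl uv False] unfolding wv_def by simp
    then show ?thesis by blast
  qed
qed

lemma F2:
  assumes u: "u \<in> N" and u': "u' \<in> N" and uu: "u \<noteq> u'"
  shows "{u, u'} \<in> E' \<and> (\<exists>s::real. (s = 1 \<or> s = -1) \<and> (\<forall>c. c \<bullet> n {u, u'} = s * (wv u c - wv u' c)))"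
proof -
  have uS: "u \<in> S'" "u' \<in> S'" using u u' unfolding N_def by auto
  have uv: "u \<noteq> v" "u' \<noteq> v" using N_ne u u' by auto
  have eu: "{v, u} \<in> Ep \<union> En" "{v, u'} \<in> Ep \<union> En" using u u' unfolding N_def by auto
  have sim: "((({v,x} \<in> Ep \<and> {v,y} \<in> Ep) \<or> ({v,x} \<in> En \<and> {v,y} \<in> En)) \<longrightarrow> {x,y} \<in> Ep) \<and>
        (({v,x} \<in> Ep \<and> {v,y} \<in> En) \<longrightarrow> {x,y} \<in> En)"
    if "x \<in> insert v S'" "y \<in> insert v S'" "x \<noteq> v" "y \<noteq> v" "x \<noteq> y" for x y
    using simpl that unfolding signed_simplicial_in_def by blast
  have simuu: "((({v,u} \<in> Ep \<and> {v,u'} \<in> Ep) \<or> ({v,u} \<in> En \<and> {v,u'} \<in> En)) \<longrightarrow> {u,u'} \<in> Ep) \<and>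
        (({v,u} \<in> Ep \<and> {v,u'} \<in> En) \<longrightarrow> {u,u'} \<in> En)"
    using sim[of u u'] uS uv uu by auto
  have simu'u: "({v,u'} \<in> Ep \<and> {v,u} \<in> En) \<longrightarrow> {u',u} \<in> En"
    using sim[of u' u] uS uv uu by auto
  have D: "x \<in> En \<Longrightarrow> x \<notin> Ep" for x using disj by auto
  have ex: "\<exists>s::real. (s = 1 \<or> s = -1) \<and> (\<forall>c. c \<bullet> n {u, u'} = s * (wv u c - wv u' c))"
    and mem: "{u, u'} \<in> Ep \<union> En"
  proof -
    have "({v,u} \<in> Ep \<or> {v,u} \<in> En) \<and> ({v,u'} \<in> Ep \<or> {v,u'} \<in> En)" using eu by auto
    then have "(\<exists>s::real. (s = 1 \<or> s = -1) \<and> (\<forall>c. c \<bullet> n {u, u'} = s * (wv u c - wv u' c))) \<and>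
       {u, u'} \<in> Ep \<union> En"
    proof (elim conjE disjE)
      assume a: "{v,u} \<in> Ep" "{v,u'} \<in> Ep"
      then have p: "{u,u'} \<in> Ep" using simuu by blast
      obtain s :: real where s: "s = 1 \<or> s = -1" "\<forall>c. c \<bullet> n {u, u'} = s * (c $ u - c $ u')"
        using nv_pos_val[OF refl uu p] by blast
      then show ?thesis using a p unfolding wv_def by auto
    next
      assume a: "{v,u} \<in> Ep" "{v,u'} \<in> En"
      then have p: "{u,u'} \<in> En" using simuu by blast
      have "\<forall>c. c \<bullet> n {u, u'} = 1 * (wv u c - wv u' c)"
        using nv_neg_val[OF refl uu D[OF p]] a D[OF a(2)] unfolding wv_def by simp
      then show ?thesis using p by blast
    next
      assume a: "{v,u} \<in> En" "{v,u'} \<in> Ep"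
      then have p: "{u,u'} \<in> En" using simu'u by (simp add: insert_commute)
      have "\<forall>c. c \<bullet> n {u, u'} = (-1) * (wv u c - wv u' c)"
        using nv_neg_val[OF refl uu D[OF p]] a D[OF a(1)] unfolding wv_def by simp
      then show ?thesis using p by blast
    next
      assume a: "{v,u} \<in> En" "{v,u'} \<in> En"
      then have p: "{u,u'} \<in> Ep" using simuu by blast
      obtain s :: real where s: "s = 1 \<or> s = -1" "\<forall>c. c \<bullet> n {u, u'} = s * (c $ u - c $ u')"
        using nv_pos_val[OF refl uu p] by blast
      have "\<forall>c. c \<bullet> n {u, u'} = (-s) * (wv u c - wv u' c)"
        using s(2) D[OF a(1)] D[OF a(2)] unfolding wv_def by (simp add: algebra_simps)
      moreover have "-s = 1 \<or> -s = -1" using s(1) by auto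
      ultimately show ?thesis using p by blast
    qed
    then show "\<exists>s::real. (s = 1 \<or> s = -1) \<and> (\<forall>c. c \<bullet> n {u, u'} = s * (wv u c - wv u' c))"
      and "{u, u'} \<in> Ep \<union> En" by auto
  qed
  have "{u, u'} \<in> E'" using mem uS unfolding ES_def by auto
  with ex show ?thesis by blast
qed

lemma vgen: "u \<in> N \<Longrightarrow> (a \<bullet> n {v, u} \<noteq> 0 \<longleftrightarrow> a $ v \<noteq> wv u a)"
proof -
  assume u: "u \<in> N"
  obtain s :: real where s: "s = 1 \<or> s = -1" "\<forall>c. c \<bullet> n {v, u} = s * (c $ v - wv u c)"
    using F1[OF u] by blast
  show ?thesis using s by auto
qed

lemma vsign:
  assumes u: "u \<in> N" and a: "a $ v \<noteq> wv u a" and a': "a' $ v \<noteq> wv u a'"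
  shows "sgn (a \<bullet> n {v, u}) = sgn (a' \<bullet> n {v, u}) \<longleftrightarrow> (wv u a < a $ v \<longleftrightarrow> wv u a' < a' $ v)"
proof -
  obtain s :: real where s: "s = 1 \<or> s = -1" "\<forall>c. c \<bullet> n {v, u} = s * (c $ v - wv u c)"
    using F1[OF u] by blast
  have "sgn (s * (a $ v - wv u a)) = sgn (s * (a' $ v - wv u a')) \<longleftrightarrow>
        (0 < a $ v - wv u a \<longleftrightarrow> 0 < a' $ v - wv u a')"
    by (rule sgn_s) (use s a a' in auto)
  then show ?thesis using s(2) by auto
qed

lemma order:
  assumes ga: "gen E' n a" and gc: "gen E' n c" and sr: "sameR Ep E' a c"
    and u: "u \<in> N" and u': "u' \<in> N"
  shows "wv u a < wv u' a \<longleftrightarrow> wv u c < wv u' c"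
proof (cases "u = u'")
  case True then show ?thesis by simp
next
  case False
  obtain s :: real where mem: "{u, u'} \<in> E'" and s: "s = 1 \<or> s = -1"
    "\<forall>c. c \<bullet> n {u, u'} = s * (wv u c - wv u' c)"
    using F2[OF u u' False] by blast
  have na: "wv u a - wv u' a \<noteq> 0" using ga mem s unfolding gen_def by force
  have nc: "wv u c - wv u' c \<noteq> 0" using gc mem s unfolding gen_def by force
  have "sgn (a \<bullet> n {u, u'}) = sgn (c \<bullet> n {u, u'})" using sr mem unfolding sameR_def by blast
  then have "sgn (s * (wv u a - wv u' a)) = sgn (s * (wv u c - wv u' c))" using s(2) by simp
  then have "0 < wv u a - wv u' a \<longleftrightarrow> 0 < wv u c - wv u' c" using sgn_s[OF s(1) na nc] by simp
  then show ?thesis using na nc by linarith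
qed

lemma winj: "gen E' n c \<Longrightarrow> inj_on (\<lambda>u. wv u c) N"
proof (rule inj_onI, rule ccontr)
  fix u u' assume g: "gen E' n c" and u: "u \<in> N" and u': "u' \<in> N" and eq: "wv u c = wv u' c"
    and ne: "u \<noteq> u'"
  obtain s :: real where mem: "{u, u'} \<in> E'" and s: "s = 1 \<or> s = -1"
    "\<forall>c. c \<bullet> n {u, u'} = s * (wv u c - wv u' c)"
    using F2[OF u u' ne] by blast
  have "c \<bullet> n {u, u'} = 0" using s eq by simp
  then show False using g mem unfolding gen_def by blast
qed

definition T :: "real^'n \<Rightarrow> nat \<Rightarrow> real" where
  "T c = (SOME t. cutP ((\<lambda>u. wv u c) ` N) t)"

lemma T_cutP: "cutP ((\<lambda>u. wv u c) ` N) (T c)"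
  unfolding T_def by (rule cutP_some) simp

lemma cardW: "gen E' n c \<Longrightarrow> card ((\<lambda>u. wv u c) ` N) = card N"
  using winj by (simp add: card_image)

lemma TB1: "gen E' n c \<Longrightarrow> k \<le> card N \<Longrightarrow> u \<in> N \<Longrightarrow> wv u c \<noteq> T c k"
  using cutP_1[OF T_cutP[of c], of k "wv u c"] cardW[of c] by simp

lemma TB2:
  assumes g: "gen E' n c" and k: "k \<le> card N"
  shows "card {u\<in>N. wv u c < T c k} = k"
proof -
  have im: "(\<lambda>u. wv u c) ` {u\<in>N. wv u c < T c k} = {x\<in>(\<lambda>u. wv u c) ` N. x < T c k}" by auto
  have inj: "inj_on (\<lambda>u. wv u c) {u\<in>N. wv u c < T c k}"
    using winj[OF g] by (rule inj_on_subset) auto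
  have "card {u\<in>N. wv u c < T c k} = card ((\<lambda>u. wv u c) ` {u\<in>N. wv u c < T c k})"
    using card_image[OF inj] by simp
  also have "\<dots> = card {x\<in>(\<lambda>u. wv u c) ` N. x < T c k}" unfolding im ..
  also have "\<dots> = k" using cutP_2[OF T_cutP[of c], of k] cardW[OF g] k by simp
  finally show ?thesis .
qed

lemma TB3:
  assumes g: "gen E' n c" and k: "k < card N"
  shows "\<exists>u0\<in>N. \<not> wv u0 c < T c k \<and> wv u0 c < T c (Suc k) \<and>
     (\<forall>u\<in>N. u \<noteq> u0 \<longrightarrow> (wv u c < T c k \<longleftrightarrow> wv u c < T c (Suc k)))"
proof -
  obtain x where x: "x \<in> (\<lambda>u. wv u c) ` N" "\<not> x < T c k" "x < T c (Suc k)"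
    and y: "\<forall>y\<in>(\<lambda>u. wv u c) ` N. y \<noteq> x \<longrightarrow> (y < T c k \<longleftrightarrow> y < T c (Suc k))"
    using cutP_3[OF T_cutP[of c], of k] cardW[OF g] k by auto
  obtain u0 where u0: "u0 \<in> N" "x = wv u0 c" using x(1) by blast
  have "\<forall>u\<in>N. u \<noteq> u0 \<longrightarrow> (wv u c < T c k \<longleftrightarrow> wv u c < T c (Suc k))"
  proof (intro ballI impI)
    fix u assume u: "u \<in> N" "u \<noteq> u0"
    then have "wv u c \<noteq> x" using winj[OF g] u0 unfolding inj_on_def by metis
    then show "wv u c < T c k \<longleftrightarrow> wv u c < T c (Suc k)" using y u by blast
  qed
  then show ?thesis using u0 x by blast
qed

lemma T0: "gen E' n c \<Longrightarrow> u \<in> N \<Longrightarrow> \<not> wv u c < T c 0"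
  using TB2[of c 0] by auto

lemma Ttop: "gen E' n c \<Longrightarrow> u \<in> N \<Longrightarrow> wv u c < T c (card N)"
proof -
  assume g: "gen E' n c" and u: "u \<in> N"
  have "{u\<in>N. wv u c < T c (card N)} = N"
    using TB2[OF g order.refl] by (intro card_subset_eq) auto
  then show ?thesis using u by blast
qed

lemma P_gen:
  assumes g: "gen E' n c" and k: "k \<le> card N"
  shows "gen E n (upd c (T c k))"
  unfolding gen_def
proof
  fix e assume "e \<in> E"
  then have "e \<in> E' \<or> (\<exists>u\<in>N. e = {v, u})" using E_decomp by auto
  then show "upd c (T c k) \<bullet> n e \<noteq> 0"
  proof
    assume e: "e \<in> E'"
    then show ?thesis using upd_E'[OF e] g unfolding gen_def by simp
  next
    assume "\<exists>u\<in>N. e = {v, u}"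
    then obtain u where u: "u \<in> N" "e = {v, u}" by blast
    then show ?thesis using vgen[OF u(1)] TB1[OF g k u(1)] by simp
  qed
qed

lemma fiber_onediff:
  assumes g: "gen E' n c" and k: "k < card N"
  shows "onediff Ep E (upd c (T c k)) (upd c (T c (Suc k)))"
proof -
  obtain u0 where u0: "u0 \<in> N" "\<not> wv u0 c < T c k" "wv u0 c < T c (Suc k)"
    and oth: "\<forall>u\<in>N. u \<noteq> u0 \<longrightarrow> (wv u c < T c k \<longleftrightarrow> wv u c < T c (Suc k))"
    using TB3[OF g k] by blast
  have t1: "\<And>u. u \<in> N \<Longrightarrow> wv u c \<noteq> T c k" using TB1[OF g] k by simp
  have t2: "\<And>u. u \<in> N \<Longrightarrow> wv u c \<noteq> T c (Suc k)" using TB1[OF g] k by simp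
  show ?thesis unfolding onediff_def
  proof (intro bexI[of _ "{v, u0}"] conjI ballI)
    show "{v, u0} \<in> E" using E_decomp u0 by auto
    show "sgn (upd c (T c k) \<bullet> n {v, u0}) \<noteq> sgn (upd c (T c (Suc k)) \<bullet> n {v, u0})"
      using vsign[OF u0(1), of "upd c (T c k)" "upd c (T c (Suc k))"] t1[OF u0(1)] t2[OF u0(1)] u0
      by simp
    fix e assume e: "e \<in> E - {{v, u0}}"
    then have "e \<in> E' \<or> (\<exists>u\<in>N. e = {v, u})" using E_decomp by auto
    then show "sgn (upd c (T c k) \<bullet> n e) = sgn (upd c (T c (Suc k)) \<bullet> n e)"
    proof
      assume "e \<in> E'" then show ?thesis using upd_E' by simp
    next
      assume "\<exists>u\<in>N. e = {v, u}"
      then obtain u where u: "u \<in> N" "e = {v, u}" by blast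
      then have "u \<noteq> u0" using e by auto
      then show ?thesis
        using vsign[OF u(1), of "upd c (T c k)" "upd c (T c (Suc k))"] t1[OF u(1)] t2[OF u(1)] oth u
        by simp
    qed
  qed
qed

lemma base_onediff:
  assumes g: "gen E' n c" and g': "gen E' n c'" and od: "onediff Ep E' c c'"
    and q: "q = 0 \<or> q = card N"
  shows "onediff Ep E (upd c (T c q)) (upd c' (T c' q))"
proof -
  have qle: "q \<le> card N" using q by auto
  obtain e0 where e0: "e0 \<in> E'" "sgn (c \<bullet> n e0) \<noteq> sgn (c' \<bullet> n e0)"
    and oth: "\<forall>e\<in>E' - {e0}. sgn (c \<bullet> n e) = sgn (c' \<bullet> n e)"
    using od unfolding onediff_def by blast
  have side: "wv u c < T c q \<longleftrightarrow> wv u c' < T c' q" if u: "u \<in> N" for u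
    using q T0[OF g u] T0[OF g' u] Ttop[OF g u] Ttop[OF g' u] by auto
  show ?thesis unfolding onediff_def
  proof (intro bexI[of _ e0] conjI ballI)
    show "e0 \<in> E" using e0 E'_sub by auto
    show "sgn (upd c (T c q) \<bullet> n e0) \<noteq> sgn (upd c' (T c' q) \<bullet> n e0)"
      using e0 upd_E' by simp
    fix e assume e: "e \<in> E - {e0}"
    then have "e \<in> E' \<or> (\<exists>u\<in>N. e = {v, u})" using E_decomp by auto
    then show "sgn (upd c (T c q) \<bullet> n e) = sgn (upd c' (T c' q) \<bullet> n e)"
    proof
      assume e': "e \<in> E'" then show ?thesis using upd_E' oth e by simp
    next
      assume "\<exists>u\<in>N. e = {v, u}"
      then obtain u where u: "u \<in> N" "e = {v, u}" by blast
      then show ?thesis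
        using vsign[OF u(1), of "upd c (T c q)" "upd c' (T c' q)"] TB1[OF g qle u(1)]
          TB1[OF g' qle u(1)] side[OF u(1)] by simp
    qed
  qed
qed

lemma fiber_distinct:
  assumes g: "gen E' n c" and p: "p \<le> card N" and p': "p' \<le> card N" and ne: "p \<noteq> p'"
  shows "\<not> sameR Ep E (upd c (T c p)) (upd c (T c p'))"
proof
  assume sr: "sameR Ep E (upd c (T c p)) (upd c (T c p'))"
  have "{u\<in>N. wv u c < T c p} \<noteq> {u\<in>N. wv u c < T c p'}"
    using TB2[OF g p] TB2[OF g p'] ne by metis
  then obtain u where u: "u \<in> N" and d: "(wv u c < T c p) \<noteq> (wv u c < T c p')" by blast
  have "{v, u} \<in> E" using E_decomp u by auto
  then have "sgn (upd c (T c p) \<bullet> n {v, u}) = sgn (upd c (T c p') \<bullet> n {v, u})"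
    using sr unfolding sameR_def by blast
  then show False
    using vsign[OF u, of "upd c (T c p)" "upd c (T c p')"] TB1[OF g p u] TB1[OF g p' u] d u by simp
qed

lemma base_distinct:
  assumes "\<not> sameR Ep E' c c'"
  shows "\<not> sameR Ep E (upd c t) (upd c' t')"
proof
  assume sr: "sameR Ep E (upd c t) (upd c' t')"
  obtain e where e: "e \<in> E'" "sgn (c \<bullet> n e) \<noteq> sgn (c' \<bullet> n e)"
    using assms unfolding sameR_def by blast
  have "e \<in> E" using e E'_sub by blast
  then have "sgn (upd c t \<bullet> n e) = sgn (upd c' t' \<bullet> n e)" using sr unfolding sameR_def by blast
  then show False using e upd_E'[OF e(1)] by simp
qed

lemma initial_eq:
  fixes r q :: "'n \<Rightarrow> real"
  assumes ord: "\<forall>u\<in>N. \<forall>u'\<in>N. r u < r u' \<longleftrightarrow> q u < q u'"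
    and cd: "card {u\<in>N. r u < \<alpha>} = card {u\<in>N. q u < \<beta>}"
    and nr: "\<forall>u\<in>N. r u \<noteq> \<alpha>" and nq: "\<forall>u\<in>N. q u \<noteq> \<beta>"
  shows "{u\<in>N. r u < \<alpha>} = {u\<in>N. q u < \<beta>}"
proof (rule ccontr)
  assume ne: "{u\<in>N. r u < \<alpha>} \<noteq> {u\<in>N. q u < \<beta>}"
  show False
  proof (cases "\<exists>u\<in>N. r u < \<alpha> \<and> \<not> q u < \<beta>")
    case True
    then obtain u where u: "u \<in> N" "r u < \<alpha>" "\<not> q u < \<beta>" by blast
    have "{u\<in>N. q u < \<beta>} \<subset> {u\<in>N. r u < \<alpha>}"
    proof
      show "{u\<in>N. q u < \<beta>} \<subseteq> {u\<in>N. r u < \<alpha>}"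
      proof
        fix u' assume u': "u' \<in> {u\<in>N. q u < \<beta>}"
        then have "q u' < q u" using u by auto
        then have "r u' < r u" using ord u u' by auto
        then show "u' \<in> {u\<in>N. r u < \<alpha>}" using u u' by auto
      qed
      show "{u\<in>N. q u < \<beta>} \<noteq> {u\<in>N. r u < \<alpha>}" using u by auto
    qed
    then have "card {u\<in>N. q u < \<beta>} < card {u\<in>N. r u < \<alpha>}" by (intro psubset_card_mono) auto
    then show False using cd by simp
  next
    case False
    then obtain u where u: "u \<in> N" "q u < \<beta>" "\<not> r u < \<alpha>" using ne by blast
    have "{u\<in>N. r u < \<alpha>} \<subset> {u\<in>N. q u < \<beta>}"
    proof
      show "{u\<in>N. r u < \<alpha>} \<subseteq> {u\<in>N. q u < \<beta>}"
      proof
        fix u' assume u': "u' \<in> {u\<in>N. r u < \<alpha>}"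
        then have "r u' < r u" using u nr by auto
        then have "q u' < q u" using ord u u' by auto
        then show "u' \<in> {u\<in>N. q u < \<beta>}" using u u' by auto
      qed
      show "{u\<in>N. r u < \<alpha>} \<noteq> {u\<in>N. q u < \<beta>}" using u by auto
    qed
    then have "card {u\<in>N. r u < \<alpha>} < card {u\<in>N. q u < \<beta>}" by (intro psubset_card_mono) auto
    then show False using cd by simp
  qed
qed

lemma cover_point:
  assumes ga: "gen E n a" and gc: "gen E' n c" and sr: "sameR Ep E' a c"
  defines "k \<equiv> card {u\<in>N. wv u a < a $ v}"
  shows "k \<le> card N" and "sameR Ep E a (upd c (T c k))"
proof -
  show kle: "k \<le> card N" unfolding k_def by (rule card_mono) auto
  have ga': "gen E' n a" using ga E'_sub unfolding gen_def by auto
  have nr: "\<forall>u\<in>N. wv u a \<noteq> a $ v"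
  proof
    fix u assume u: "u \<in> N"
    then have "{v, u} \<in> E" using E_decomp by auto
    then have "a \<bullet> n {v, u} \<noteq> 0" using ga unfolding gen_def by blast
    then show "wv u a \<noteq> a $ v" using vgen[OF u] by simp
  qed
  have eqs: "{u\<in>N. wv u a < a $ v} = {u\<in>N. wv u c < T c k}"
  proof (rule initial_eq)
    show "\<forall>u\<in>N. \<forall>u'\<in>N. wv u a < wv u' a \<longleftrightarrow> wv u c < wv u' c"
      using order[OF ga' gc sr] by blast
    show "card {u\<in>N. wv u a < a $ v} = card {u\<in>N. wv u c < T c k}"
      using TB2[OF gc kle] unfolding k_def by simp
    show "\<forall>u\<in>N. wv u a \<noteq> a $ v" by (rule nr)
    show "\<forall>u\<in>N. wv u c \<noteq> T c k" using TB1[OF gc kle] by blast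
  qed
  show "sameR Ep E a (upd c (T c k))"
    unfolding sameR_def
  proof
    fix e assume "e \<in> E"
    then have "e \<in> E' \<or> (\<exists>u\<in>N. e = {v, u})" using E_decomp by auto
    then show "sgn (a \<bullet> n e) = sgn (upd c (T c k) \<bullet> n e)"
    proof
      assume e: "e \<in> E'" then show ?thesis using upd_E' sr unfolding sameR_def by simp
    next
      assume "\<exists>u\<in>N. e = {v, u}"
      then obtain u where u: "u \<in> N" "e = {v, u}" by blast
      have "(wv u a < a $ v) \<longleftrightarrow> (wv u c < T c k)" using eqs u(1) by blast
      then show ?thesis
        using vsign[OF u(1), of a "upd c (T c k)"] nr u TB1[OF gc kle u(1)] by auto
    qed
  qed
qed

end

context stepctx
begin

abbreviation "m \<equiv> length cs"
definition K :: nat where "K = card N + 1"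
definition kk :: "nat \<Rightarrow> nat \<Rightarrow> nat" where "kk j k = (if even j then k else card N - k)"
definition g :: "nat \<Rightarrow> nat \<Rightarrow> real^'n" where "g j k = upd (cs!j) (T (cs!j) (kk j k))"
definition cs' :: "(real^'n) list" where "cs' = map (\<lambda>i. g (i div K) (i mod K)) [0..<m * K]"

lemma divmod_aux: assumes "(r::nat) < K'" shows "(j * K' + r) div K' = j" "(j * K' + r) mod K' = r"
  using assms by (simp_all add: add.commute)

lemma K_pos: "0 < K" unfolding K_def by simp

lemma len_cs': "length cs' = m * K" unfolding cs'_def by simp

lemma nth_cs': "i < m * K \<Longrightarrow> cs' ! i = g (i div K) (i mod K)" unfolding cs'_def by simp

lemma idx: "i < m * K \<Longrightarrow> i div K < m \<and> i mod K < K"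
  using K_pos by (auto simp: less_mult_imp_div_less)

lemma rc_gen: "j < m \<Longrightarrow> gen E' n (cs!j)" using rc unfolding RC_def by auto
lemma rc_cov: "gen E' n a \<Longrightarrow> \<exists>c\<in>set cs. sameR Ep E' a c" using rc unfolding RC_def by auto
lemma rc_dist: "j < m \<Longrightarrow> j' < m \<Longrightarrow> j \<noteq> j' \<Longrightarrow> \<not> sameR Ep E' (cs!j) (cs!j')"
  using rc unfolding RC_def by auto
lemma rc_trans: "2 \<le> m \<Longrightarrow> j < m \<Longrightarrow> onediff Ep E' (cs!j) (cs!((j+1) mod m))"
  using rc unfolding RC_def by auto
lemma rc_card: "card E' + 1 \<le> m" using rc unfolding RC_def by auto
lemma rc_par: "m = 1 \<or> even m" using rc unfolding RC_def by auto

lemma kk_le: "k \<le> card N \<Longrightarrow> kk j k \<le> card N" unfolding kk_def by auto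

lemma kk_inj: "k \<le> card N \<Longrightarrow> k' \<le> card N \<Longrightarrow> k \<noteq> k' \<Longrightarrow> kk j k \<noteq> kk j k'"
  unfolding kk_def by auto

lemma m1_N: assumes "m = 1" shows "card N \<le> 1"
proof (rule ccontr)
  assume "\<not> card N \<le> 1"
  then have c2: "2 \<le> card N" by simp
  then obtain u where u: "u \<in> N" by (metis card.empty card_ge_0_finite not_numeral_le_zero equals0I)
  have "card (N - {u}) \<ge> 1" using c2 u by simp
  then obtain u' where u': "u' \<in> N - {u}" by (metis card.empty equals0I not_one_le_zero)
  then have "{u, u'} \<in> E'" using F2[OF u, of u'] by auto
  moreover have "finite E'" by simp
  ultimately have "card E' \<ge> 1" by (metis card_0_eq empty_iff less_one not_le)
  then show False using rc_card assms by simp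
qed

lemma g_gen: "j < m \<Longrightarrow> k < K \<Longrightarrow> gen E n (g j k)"
  unfolding g_def by (rule P_gen[OF rc_gen]) (auto simp: K_def intro: kk_le)

lemma new_gen: "\<forall>c\<in>set cs'. gen E n c"
proof
  fix c assume "c \<in> set cs'"
  then obtain i where i: "i < m * K" "c = cs' ! i" by (auto simp: in_set_conv_nth len_cs')
  then show "gen E n c" using nth_cs'[OF i(1)] idx[OF i(1)] g_gen by simp
qed

lemma new_cov: "gen E n a \<Longrightarrow> \<exists>c\<in>set cs'. sameR Ep E a c"
proof -
  assume ga: "gen E n a"
  have ga': "gen E' n a" using ga E'_sub unfolding gen_def by auto
  obtain c where c: "c \<in> set cs" and sr: "sameR Ep E' a c" using rc_cov[OF ga'] by blast
  obtain j where j: "j < m" "c = cs!j" using c by (auto simp: in_set_conv_nth)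
  define k0 where "k0 = card {u\<in>N. wv u a < a $ v}"
  have gc: "gen E' n c" using rc_gen j by simp
  have k0: "k0 \<le> card N" and srk: "sameR Ep E a (upd c (T c k0))"
    using cover_point[OF ga gc sr] unfolding k0_def by auto
  define k where "k = (if even j then k0 else card N - k0)"
  have kK: "k < K" unfolding k_def K_def using k0 by auto
  have kkk: "kk j k = k0" unfolding kk_def k_def using k0 by auto
  define i where "i = j * K + k"
  have iK: "i < m * K"
  proof -
    have "i < j * K + K" unfolding i_def using kK by simp
    also have "\<dots> = (j + 1) * K" by simp
    also have "\<dots> \<le> m * K" using j(1) by (intro mult_right_mono) auto
    finally show ?thesis .
  qed
  have "i div K = j" "i mod K = k" unfolding i_def using kK K_pos by auto
  then have "cs' ! i = upd c (T c k0)" using nth_cs'[OF iK] kkk unfolding g_def j(2) by simp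
  then show ?thesis using srk iK len_cs' by (metis nth_mem)
qed

lemma new_dist:
  assumes i: "i < m * K" and i': "i' < m * K" and ne: "i \<noteq> i'"
  shows "\<not> sameR Ep E (cs'!i) (cs'!i')"
proof -
  define j where "j = i div K"
  define k where "k = i mod K"
  define j' where "j' = i' div K"
  define k' where "k' = i' mod K"
  have jk: "j < m" "k < K" "j' < m" "k' < K" using idx[OF i] idx[OF i'] unfolding j_def k_def j'_def k'_def by auto
  have c: "cs'!i = g j k" "cs'!i' = g j' k'" using nth_cs' i i' unfolding j_def k_def j'_def k'_def by auto
  show ?thesis
  proof (cases "j = j'")
    case False
    then show ?thesis unfolding c g_def by (rule base_distinct[OF rc_dist[OF jk(1) jk(3)]])
  next
    case True
    then have "k \<noteq> k'" using ne unfolding j_def k_def j'_def k'_def by (metis div_mult_mod_eq)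
    then have "kk j k \<noteq> kk j k'" using jk by (intro kk_inj) (auto simp: K_def)
    then show ?thesis unfolding c g_def True
      using fiber_distinct[OF rc_gen[OF jk(3)]] kk_le jk by (auto simp: K_def True)
  qed
qed

lemma new_trans:
  assumes two: "2 \<le> m * K" and i: "i < m * K"
  shows "onediff Ep E (cs'!i) (cs'!((i+1) mod (m * K)))"
proof -
  define j where "j = i div K"
  define k where "k = i mod K"
  have jk: "j < m" "k < K" using idx[OF i] unfolding j_def k_def by auto
  have ieq: "i = j * K + k" unfolding j_def k_def by simp
  have ci: "cs'!i = g j k" using nth_cs'[OF i] unfolding j_def k_def by simp
  have gc: "gen E' n (cs!j)" using rc_gen[OF jk(1)] .
  show ?thesis
  proof (cases "k < card N")
    case True
    have i1: "i + 1 < m * K"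
    proof -
      have "i + 1 < j * K + K" using ieq True unfolding K_def by simp
      also have "\<dots> = (j + 1) * K" by simp
      also have "\<dots> \<le> m * K" using jk(1) by (intro mult_right_mono) auto
      finally show ?thesis .
    qed
    have "i + 1 = j * K + Suc k" using ieq by simp
    moreover have "Suc k < K" using True unfolding K_def by simp
    ultimately have "(i + 1) div K = j" "(i + 1) mod K = Suc k"
      using divmod_aux[of "Suc k" K j] by simp_all
    then have ci1: "cs'!((i+1) mod (m * K)) = g j (Suc k)" using nth_cs'[OF i1] i1 by simp
    show ?thesis
    proof (cases "even j")
      case True
      then show ?thesis unfolding ci ci1 g_def kk_def using fiber_onediff[OF gc \<open>k < card N\<close>] by simp
    next
      case False
      define p where "p = card N - Suc k"
      have p: "p < card N" "card N - k = Suc p" "card N - Suc k = p"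
        unfolding p_def using \<open>k < card N\<close> by auto
      show ?thesis unfolding ci ci1 g_def kk_def using False p
        by (simp add: onediff_sym[OF fiber_onediff[OF gc p(1)]])
    qed
  next
    case False
    then have kN: "k = card N" using jk(2) unfolding K_def by simp
    have kkj: "kk j k = (if even j then card N else 0)" unfolding kk_def kN by simp
    show ?thesis
    proof (cases "i + 1 < m * K")
      case True
      have j1: "j + 1 < m"
      proof (rule ccontr)
        assume "\<not> j + 1 < m"
        then have "m \<le> j + 1" by simp
        then have "m * K \<le> (j + 1) * K" by (rule mult_right_mono) simp
        moreover have "i + 1 = (j + 1) * K" using ieq kN unfolding K_def by simp
        ultimately show False using True by simp
      qed
      have "i + 1 = (j + 1) * K" using ieq kN unfolding K_def by simp
      then have "(i + 1) div K = j + 1" "(i + 1) mod K = 0" using K_pos by auto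
      then have ci1: "cs'!((i+1) mod (m * K)) = g (j + 1) 0" using nth_cs'[OF True] True by simp
      have kk1: "kk (j + 1) 0 = (if even j then card N else 0)" unfolding kk_def by simp
      have od: "onediff Ep E' (cs!j) (cs!(j + 1))"
        using rc_trans[of j] j1 by simp
      show ?thesis unfolding ci ci1 g_def kkj kk1
        using base_onediff[OF gc rc_gen[OF j1] od, of "if even j then card N else 0"] by simp
    next
      case False
      then have i1: "i + 1 = m * K" using i by simp
      then have wrap: "(i + 1) mod (m * K) = 0" by simp
      have m0: "0 < m" using jk(1) by (cases cs) simp_all
      have c0: "cs'!0 = g 0 0" using nth_cs'[of 0] m0 K_pos by simp
      have jm: "j = m - 1"
      proof -
        have "(j + 1) * K = m * K" using i1 ieq kN unfolding K_def by simp
        then have "j + 1 = m" using K_pos by (metis mult_right_cancel not_gr0)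
        then show ?thesis by simp
      qed
      show ?thesis
      proof (cases "m = 1")
        case True
        then have j0: "j = 0" using jm by simp
        have "card N \<le> 1" using m1_N True .
        moreover have "card N \<noteq> 0" using two True unfolding K_def by auto
        ultimately have N1: "card N = 1" by linarith
        have "onediff Ep E (upd (cs!0) (T (cs!0) 1)) (upd (cs!0) (T (cs!0) 0))"
          using onediff_sym[OF fiber_onediff[OF rc_gen[OF m0], of 0]] N1 by simp
        then show ?thesis unfolding wrap c0 ci g_def kkj j0 using N1 kN by (simp add: kk_def)
      next
        case False
        then have ev: "even m" using rc_par by simp
        then have oj: "odd j" using jm m0 by (simp add: even_diff_nat)
        have m2: "2 \<le> m" using False m0 by linarith
        have od: "onediff Ep E' (cs!j) (cs!0)"
          using rc_trans[OF m2 jk(1)] jm m0 by simp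
        show ?thesis unfolding wrap c0 ci g_def kkj using oj
          using base_onediff[OF gc rc_gen[OF m0] od, of 0] by (simp add: kk_def)
      qed
    qed
  qed
qed

lemma new_card: "card E + 1 \<le> m * K"
proof -
  have "card E + 1 = card E' + 1 + card N" using card_E by simp
  also have "\<dots> \<le> m + card N" using rc_card by simp
  also have "\<dots> \<le> m + m * card N" using rc_card by simp
  also have "\<dots> = m * K" unfolding K_def by (simp add: algebra_simps)
  finally show ?thesis .
qed

lemma new_par: "m * K = 1 \<or> even (m * K)"
proof (cases "m = 1")
  case True
  then have "card N \<le> 1" by (rule m1_N)
  then have "card N = 0 \<or> card N = 1" by linarith
  then show ?thesis using True unfolding K_def by auto
next
  case False
  then show ?thesis using rc_par by simp
qed

lemma new_RC: "RC Ep E cs'"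
  unfolding RC_def
  using new_gen new_cov new_dist new_trans new_card new_par by (simp add: len_cs')

end

lemma RC_step:
  assumes "signed_graph Ep En" "v \<notin> S'" "signed_simplicial_in Ep En (insert v S') v"
    "RC Ep (ES Ep En S') cs"
  shows "\<exists>cs'. RC Ep (ES Ep En (insert v S')) cs'"
proof -
  interpret stepctx Ep En v S' cs using assms by unfold_locales
  show ?thesis using new_RC by blast
qed

lemma ES_empty:
  assumes sg: "signed_graph Ep En"
  shows "ES Ep En {} = {}"
proof -
  have "e \<notin> ES Ep En {}" for e
  proof
    assume "e \<in> ES Ep En {}"
    then have e: "e \<in> Ep \<union> En" "e \<subseteq> {}" unfolding ES_def by auto
    have "\<exists>i j. i \<noteq> j \<and> e = {i, j}"
      using conjunct1[OF sg[unfolded signed_graph_def]] e(1) by (rule bspec)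
    then show False using e(2) by auto
  qed
  then show ?thesis by blast
qed

lemma RC_nil:
  assumes sg: "signed_graph Ep En"
  shows "RC Ep (ES Ep En {}) [0]"
  unfolding RC_def ES_empty[OF sg] by (simp add: gen_def sameR_def)

lemma RC_list:
  assumes sg: "signed_graph Ep En"
  shows "distinct ws \<Longrightarrow> (\<forall>i<length ws. signed_simplicial_in Ep En (set (drop i ws)) (ws!i)) \<Longrightarrow>
    \<exists>cs. RC Ep (ES Ep En (set ws)) cs"
proof (induction ws)
  case Nil
  then show ?case using RC_nil[OF sg] by auto
next
  case (Cons v ws)
  have d: "distinct ws" "v \<notin> set ws" using Cons.prems(1) by auto
  have "\<forall>i<length ws. signed_simplicial_in Ep En (set (drop i ws)) (ws!i)"
  proof (intro allI impI)
    fix i assume "i < length ws"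
    then have "signed_simplicial_in Ep En (set (drop (Suc i) (v # ws))) ((v # ws)!(Suc i))"
      using Cons.prems(2) by (metis Suc_less_eq length_Cons)
    then show "signed_simplicial_in Ep En (set (drop i ws)) (ws!i)" by simp
  qed
  then obtain cs where cs: "RC Ep (ES Ep En (set ws)) cs" using Cons.IH d(1) by blast
  have "signed_simplicial_in Ep En (set (drop 0 (v # ws))) ((v # ws)!0)"
    using Cons.prems(2) by blast
  then have s: "signed_simplicial_in Ep En (insert v (set ws)) v" by simp
  show ?case using RC_step[OF sg d(2) s cs] by simp
qed

theorem corollary1p3:
  fixes Ep En :: "'n::finite set set"
  assumes "signed_graph Ep En"
    and "card (Ep \<union> En) \<ge> 2"
    and "\<exists>vs. signed_peo Ep En vs"
  shows "\<exists>cs. hamiltonian_cycle (skel_vertices (signed_graphic_zonotope Ep En))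
                (skel_adj (signed_graphic_zonotope Ep En)) cs"
proof -
  note sg = assms(1)
  obtain vs where vs: "distinct vs" "set vs = UNIV"
    "\<forall>i<length vs. signed_simplicial_in Ep En (set (drop i vs)) (vs ! i)"
    using assms(3) unfolding signed_peo_def by blast
  define E where "E = Ep \<union> En"
  have ESU: "ES Ep En UNIV = E" unfolding ES_def E_def by auto
  obtain cs where rc: "RC Ep E cs" using RC_list[OF sg vs(1) vs(3)] vs(2) ESU by auto
  have Zeq: "signed_graphic_zonotope Ep En = Zon E (nv Ep)"
    unfolding E_def by (rule zonotope_eq[OF sg])
  have fin: "finite E" by simp
  have nz: "\<forall>e\<in>E. (nv Ep) e \<noteq> 0"
  proof
    fix e assume eE: "e \<in> E"
    have "\<exists>i j. i \<noteq> j \<and> e = {i, j}"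
      using conjunct1[OF sg[unfolded signed_graph_def]] eE unfolding E_def by (rule bspec)
    then obtain i j where ij: "i \<noteq> j" "e = {i, j}" by (elim exE conjE)
    show "(nv Ep) e \<noteq> 0" by (rule nv_nz[OF ij(2) ij(1)])
  qed
  note rcs = rc[unfolded RC_def]
  have rgen: "\<forall>c\<in>set cs. gen E (nv Ep) c" using rcs by (elim conjE)
  have rcov: "\<forall>a. gen E (nv Ep) a \<longrightarrow> (\<exists>c\<in>set cs. sameR Ep E a c)" using rcs by (elim conjE)
  have rdist: "\<forall>i<length cs. \<forall>j<length cs. i \<noteq> j \<longrightarrow> \<not> sameR Ep E (cs!i) (cs!j)"
    using rcs by (elim conjE)
  have rtrans: "2 \<le> length cs \<longrightarrow> (\<forall>i<length cs. onediff Ep E (cs!i) (cs!((i+1) mod length cs)))"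
    using rcs by (elim conjE)
  have rcard: "card E + 1 \<le> length cs" using rcs by (elim conjE)
  have len3: "3 \<le> length cs" using rcard assms(2) unfolding E_def by simp
  define ps where "ps = map (pt E (nv Ep)) cs"
  have lenps: "length ps = length cs" unfolding ps_def by simp
  have psn: "i < length cs \<Longrightarrow> ps ! i = pt E (nv Ep) (cs ! i)" for i unfolding ps_def by simp
  have cgen: "i < length cs \<Longrightarrow> gen E (nv Ep) (cs ! i)" for i using rgen nth_mem by blast
  have ne_pt: "pt E (nv Ep) (cs!i) \<noteq> pt E (nv Ep) (cs!j)" if ijh: "i < length cs" "j < length cs" "i \<noteq> j" for i j
  proof -
    obtain e where e: "e \<in> E" "sgn (cs!i \<bullet> (nv Ep) e) \<noteq> sgn (cs!j \<bullet> (nv Ep) e)"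
    proof -
      have "\<not> sameR Ep E (cs!i) (cs!j)" using rdist ijh by blast
      then show ?thesis using that unfolding sameR_def by blast
    qed
    show ?thesis by (rule pt_distinct[OF fin cgen[OF ijh(1)] e])
  qed
  have dist: "distinct ps"
    unfolding distinct_conv_nth lenps using ne_pt psn by simp
  have setps: "set ps = skel_vertices (signed_graphic_zonotope Ep En)"
  proof
    show "set ps \<subseteq> skel_vertices (signed_graphic_zonotope Ep En)"
      unfolding ps_def skel_vertices_def Zeq using pt_extreme[OF fin] rgen by auto
    show "skel_vertices (signed_graphic_zonotope Ep En) \<subseteq> set ps"
    proof
      fix x assume "x \<in> skel_vertices (signed_graphic_zonotope Ep En)"
      then have "x extreme_point_of Zon E (nv Ep)" unfolding skel_vertices_def Zeq by simp
      then obtain a where a: "gen E (nv Ep) a" "x = pt E (nv Ep) a" using extreme_is_pt[OF nz] by blast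
      then obtain c where c: "c \<in> set cs" "sameR Ep E a c" using rcov by blast
      have "pt E (nv Ep) a = pt E (nv Ep) c" using c(2) unfolding sameR_def by (rule pt_cong)
      then show "x \<in> set ps" using a c(1) unfolding ps_def by simp
    qed
  qed
  have adj: "skel_adj (signed_graphic_zonotope Ep En) (ps ! i) (ps ! ((i + 1) mod length ps))"
    if i: "i < length ps" for i
  proof -
    define j where "j = (i + 1) mod length cs"
    have j: "j < length cs" unfolding j_def using len3 by (intro mod_less_divisor) linarith
    have i': "i < length cs" using i lenps by simp
    have ij: "i \<noteq> j"
    proof
      assume "i = j"
      then have "(i + 1) mod length cs = i" unfolding j_def by simp
      show False
      proof (cases "i + 1 < length cs")
        case True
        then have "(i + 1) mod length cs = i + 1" by simp
        then show False using \<open>(i + 1) mod length cs = i\<close> by simp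
      next
        case False
        then have "i + 1 = length cs" using i' by simp
        then have "(i + 1) mod length cs = 0" by simp
        then show False using \<open>(i + 1) mod length cs = i\<close> \<open>i + 1 = length cs\<close> len3 by simp
      qed
    qed
    have od: "onediff Ep E (cs!i) (cs!j)" using rtrans len3 i' unfolding j_def by simp
    then obtain e0 where e0: "e0 \<in> E" "sgn (cs!i \<bullet> (nv Ep) e0) \<noteq> sgn (cs!j \<bullet> (nv Ep) e0)"
      "\<forall>e\<in>E - {e0}. sgn (cs!i \<bullet> (nv Ep) e) = sgn (cs!j \<bullet> (nv Ep) e)"
      unfolding onediff_def by blast
    have face: "closed_segment (pt E (nv Ep) (cs!i)) (pt E (nv Ep) (cs!j)) face_of Zon E (nv Ep)"
      by (rule adj_face[OF fin cgen[OF i'] cgen[OF j] e0])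
    have v1: "ps ! i \<in> skel_vertices (signed_graphic_zonotope Ep En)" using setps i nth_mem by blast
    have v2: "ps ! j \<in> skel_vertices (signed_graphic_zonotope Ep En)" using setps j lenps nth_mem[of j ps] by simp
    show ?thesis unfolding skel_adj_def lenps j_def[symmetric]
      using v1 v2 ne_pt[OF i' j ij] face psn[OF i'] psn[OF j] Zeq by simp
  qed
  have "hamiltonian_cycle (skel_vertices (signed_graphic_zonotope Ep En))
                (skel_adj (signed_graphic_zonotope Ep En)) ps"
    unfolding hamiltonian_cycle_def using dist setps len3 lenps adj by simp
  then show ?thesis by blast
qed

end
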